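(* Let $n\ge2$, $p\in(n-1,n]$, $x_0\in\mathbb{R}^n$, $\varepsilon_1>0$, and let $D\subset\mathbb{R}^n$ be a domain containing $B(x_0,\varepsilon_1)$. Let $A^*$ be a nondegenerate continuum in $D$. Let $r>0$ and let $C_j$, $j=1,2,\dots$, be continua in $B(x_0,\varepsilon_1)$ with $h(C_j)\ge r$ for all $j$. Then there is $R_0^*>0$ such that $M_p(\Gamma(C_j,A^*,D))\ge R_0^*$ for all $j\in\mathbb{N}$.
   Context: $B(x_0,r)$ is the open Euclidean ball. $h$ is the chordal metric, $h(x,y)=\frac{|x-y|}{\sqrt{1+|x|^2}\sqrt{1+|y|^2}}$, and $h(E)=\sup_{x,y\in E}h(x,y)$. For a path family $\Gamma$, $M_p(\Gamma)=\inf\int_{\mathbb{R}^n}\rho^p\,dm$ over Borel $\rho\ge0$ with $\int_\gamma\rho\,|dx|\ge1$ for all locally rectifiable $\gamma\in\Gamma$. $\Gamma(E,F,G)$ is the family of paths $\gamma:[s,t]\to\overline{\mathbb{R}^n}$ with $\gamma(s)\in E$, $\gamma(t)\in F$, $\gamma(\tau)\in G$ for $s<\tau<t$. *)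

theory Defs
  imports "HOL-Analysis.Analysis"
begin

definition chordal :: "'a::real_normed_vector \<Rightarrow> 'a \<Rightarrow> real" where
  "chordal x y = norm (x - y) / (sqrt (1 + (norm x)\<^sup>2) * sqrt (1 + (norm y)\<^sup>2))"

definition chordal_diam :: "'a::real_normed_vector set \<Rightarrow> real" where
  "chordal_diam E = Sup {chordal x y | x y. x \<in> E \<and> y \<in> E}"

definition continuum :: "'a::topological_space set \<Rightarrow> bool" where
  "continuum E \<longleftrightarrow> E \<noteq> {} \<and> compact E \<and> connected E"

definition nondegenerate :: "'a set \<Rightarrow> bool" where
  "nondegenerate E \<longleftrightarrow> (\<exists>x\<in>E. \<exists>y\<in>E. x \<noteq> y)"

(* a path is a triple (gamma, s, t) with gamma continuous on [s,t], s < t *)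
type_synonym 'a path_t = "(real \<Rightarrow> 'a) \<times> real \<times> real"

definition partition_sums :: "(real \<Rightarrow> 'a::metric_space) \<Rightarrow> real \<Rightarrow> real \<Rightarrow> real set" where
  "partition_sums g a b =
     {(\<Sum>i<k. dist (g (u i)) (g (u (Suc i)))) | u k.
        u 0 = a \<and> u k = b \<and> (\<forall>i<k. u i \<le> u (Suc i))}"

definition rectifiable_on :: "(real \<Rightarrow> 'a::metric_space) \<Rightarrow> real \<Rightarrow> real \<Rightarrow> bool" where
  "rectifiable_on g a b \<longleftrightarrow> a \<le> b \<and> continuous_on {a..b} g \<and> bdd_above (partition_sums g a b)"

definition arc_len :: "(real \<Rightarrow> 'a::metric_space) \<Rightarrow> real \<Rightarrow> real \<Rightarrow> real" where
  "arc_len g a b = Sup (partition_sums g a b)"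

definition length_fun :: "(real \<Rightarrow> 'a::metric_space) \<Rightarrow> real \<Rightarrow> real \<Rightarrow> real \<Rightarrow> real" where
  "length_fun g a b t = arc_len g a (max a (min b t))"

(* line integral  \<integral>_g \<rho> |dx| = \<integral>_a^b \<rho>(g t) ds_g(t)  (Lebesgue-Stieltjes w.r.t. arc length) *)
definition line_integral :: "('a::metric_space \<Rightarrow> ennreal) \<Rightarrow> (real \<Rightarrow> 'a) \<Rightarrow> real \<Rightarrow> real \<Rightarrow> ennreal" where
  "line_integral \<rho> g a b =
     (\<integral>\<^sup>+ t. \<rho> (g t) * indicator {a..b} t \<partial>(interval_measure (length_fun g a b)))"

definition path_family :: "'a::topological_space set \<Rightarrow> 'a set \<Rightarrow> 'a set \<Rightarrow> 'a path_t set" where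
  "path_family E F G =
     {(g, s, t). s < t \<and> continuous_on {s..t} g \<and> g s \<in> E \<and> g t \<in> F \<and>
                 (\<forall>\<tau>. s < \<tau> \<and> \<tau> < t \<longrightarrow> g \<tau> \<in> G)}"

(* power on [0,\<infinity>] for positive exponents *)
definition enn_powr :: "ennreal \<Rightarrow> real \<Rightarrow> ennreal" where
  "enn_powr x q = (if x = \<infinity> then \<infinity> else ennreal (enn2real x powr q))"

(* admissible densities: Borel \<rho> : R^n \<rightarrow> [0,\<infinity>] with \<integral>_\<gamma> \<rho> \<ge> 1 for each
   locally rectifiable \<gamma> (for closed parameter intervals: rectifiable) *)
definition admissible :: "'a path_t set \<Rightarrow> ('a::euclidean_space \<Rightarrow> ennreal) \<Rightarrow> bool" where
  "admissible \<Gamma> \<rho> \<longleftrightarrow> \<rho> \<in> borel_measurable borel \<and>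
     (\<forall>(g, s, t) \<in> \<Gamma>. rectifiable_on g s t \<longrightarrow> line_integral \<rho> g s t \<ge> 1)"

definition p_modulus :: "real \<Rightarrow> 'a::euclidean_space path_t set \<Rightarrow> ennreal" where
  "p_modulus p \<Gamma> = (INF \<rho> \<in> Collect (admissible \<Gamma>). \<integral>\<^sup>+ x. enn_powr (\<rho> x) p \<partial>lborel)"

end

theory Submission
  imports Defs
begin

lemma partition_mono_chain:
  fixes u :: "nat \<Rightarrow> real"
  assumes "\<forall>i<k. u i \<le> u (Suc i)"
  shows "\<And>i. i \<le> k \<Longrightarrow> u 0 \<le> u i \<and> u i \<le> u k"
proof -
  have A: "\<And>i. i \<le> k \<Longrightarrow> u 0 \<le> u i"
  proof -
    fix i show "i \<le> k \<Longrightarrow> u 0 \<le> u i"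
      by (induction i) (use assms in auto, metis Suc_le_lessD order.trans)
  qed
  have B: "\<And>i. i \<le> k \<Longrightarrow> u (k - i) \<le> u k"
  proof -
    fix i show "i \<le> k \<Longrightarrow> u (k - i) \<le> u k"
    proof (induction i)
      case 0 then show ?case by simp
    next
      case (Suc i)
      then have "k - Suc i < k" "Suc (k - Suc i) = k - i" by auto
      then show ?case using Suc assms by (metis Suc_leD order.trans)
    qed
  qed
  fix i assume "i \<le> k"
  then show "u 0 \<le> u i \<and> u i \<le> u k" using A B[of "k - i"] by auto
qed

lemma psum_le:
  fixes g :: "real \<Rightarrow> 'a::metric_space"
  assumes L: "1-lipschitz_on {a..b} g" and "x \<le> b"
    and "z \<in> partition_sums g a x"
  shows "z \<le> x - a" "0 \<le> z"
proof -
  obtain u k where z: "z = (\<Sum>i<k. dist (g (u i)) (g (u (Suc i))))" and u: "u 0 = a" "u k = x"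
    "\<forall>i<k. u i \<le> u (Suc i)"
    using assms(3) unfolding partition_sums_def by auto
  have ch: "\<And>i. i \<le> k \<Longrightarrow> a \<le> u i \<and> u i \<le> x" using partition_mono_chain[OF u(3)] u by auto
  have "z \<le> (\<Sum>i<k. u (Suc i) - u i)"
    unfolding z
  proof (rule sum_mono)
    fix i assume "i \<in> {..<k}"
    then have "a \<le> u i" "u i \<le> b" "a \<le> u (Suc i)" "u (Suc i) \<le> b" "u i \<le> u (Suc i)"
      using ch[of i] ch[of "Suc i"] u(3) \<open>x \<le> b\<close> by auto
    then show "dist (g (u i)) (g (u (Suc i))) \<le> u (Suc i) - u i"
      using lipschitz_onD[OF L, of "u i" "u (Suc i)"] by (simp add: dist_real_def)
  qed
  also have "\<dots> = u k - u 0" by (rule sum_lessThan_telescope)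
  finally show "z \<le> x - a" using u by simp
  show "0 \<le> z" unfolding z by (simp add: sum_nonneg)
qed

lemma psum_nonempty:
  assumes "a \<le> x"
  shows "dist (g a) (g x) \<in> partition_sums g a x"
  unfolding partition_sums_def
  by (rule CollectI, rule exI[of _ "\<lambda>i. if i = 0 then a else x"], rule exI[of _ 1]) (use assms in auto)

lemma psum_bdd:
  assumes L: "1-lipschitz_on {a..b} g" and "x \<le> b"
  shows "bdd_above (partition_sums g a x)"
  using psum_le(1)[OF L \<open>x \<le> b\<close>] by (auto intro!: bdd_aboveI)

lemma arc_len_nonneg:
  assumes L: "1-lipschitz_on {a..b} g" and "a \<le> x" "x \<le> b"
  shows "0 \<le> arc_len g a x"
  unfolding arc_len_def
  using psum_nonempty[OF \<open>a \<le> x\<close>, of g] psum_bdd[OF L \<open>x \<le> b\<close>] psum_le(2)[OF L \<open>x \<le> b\<close>]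
  by (meson cSup_upper order.trans)

lemma arc_len_le:
  assumes L: "1-lipschitz_on {a..b} g" and "a \<le> x" "x \<le> b"
  shows "arc_len g a x \<le> x - a"
  unfolding arc_len_def
  using psum_nonempty[OF \<open>a \<le> x\<close>, of g] psum_le(1)[OF L \<open>x \<le> b\<close>]
  by (intro cSup_least) auto

lemma arc_len_mono:
  assumes L: "1-lipschitz_on {a..b} g" and "a \<le> x" "x \<le> y" "y \<le> b"
  shows "arc_len g a x \<le> arc_len g a y"
  unfolding arc_len_def
proof (rule cSup_least)
  show "partition_sums g a x \<noteq> {}" using psum_nonempty[OF \<open>a \<le> x\<close>] by auto
  fix z assume "z \<in> partition_sums g a x"
  then obtain u k where z: "z = (\<Sum>i<k. dist (g (u i)) (g (u (Suc i))))" and u: "u 0 = a" "u k = x"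
    "\<forall>i<k. u i \<le> u (Suc i)"
    unfolding partition_sums_def by auto
  define u' where "u' = u(Suc k := y)"
  have "(\<Sum>i<Suc k. dist (g (u' i)) (g (u' (Suc i)))) \<in> partition_sums g a y"
    unfolding partition_sums_def
    by (rule CollectI, rule exI[of _ u'], rule exI[of _ "Suc k"])
       (use u \<open>x \<le> y\<close> in \<open>auto simp: u'_def less_Suc_eq\<close>)
  moreover have "(\<Sum>i<Suc k. dist (g (u' i)) (g (u' (Suc i)))) = z + dist (g x) (g y)"
    unfolding z u'_def using u by simp
  ultimately have "z + dist (g x) (g y) \<le> Sup (partition_sums g a y)"
    using psum_bdd[OF L \<open>y \<le> b\<close>] by (metis cSup_upper)
  then show "z \<le> Sup (partition_sums g a y)" by (smt (verit) zero_le_dist)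
qed

lemma arc_len_lip:
  assumes L: "1-lipschitz_on {a..b} g" and "a \<le> x" "x \<le> y" "y \<le> b"
  shows "arc_len g a y \<le> arc_len g a x + (y - x)"
proof -
  have main: "\<And>u. u 0 = a \<longrightarrow> (\<forall>i<k. u i \<le> u (Suc i)) \<longrightarrow> u k \<le> b \<longrightarrow>
     (\<forall>x. a \<le> x \<and> x \<le> u k \<longrightarrow> (\<Sum>i<k. dist (g (u i)) (g (u (Suc i)))) \<le> arc_len g a x + (u k - x))"
    for k
  proof (induction k)
    case 0
    show ?case
    proof (intro impI allI)
      fix u :: "nat \<Rightarrow> real" and x
      assume "u 0 = a" "\<forall>i<0. u i \<le> u (Suc i)" "u 0 \<le> b" "a \<le> x \<and> x \<le> u 0"
      then have "x = a" "a \<le> b" by auto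
      then show "(\<Sum>i<0. dist (g (u i)) (g (u (Suc i)))) \<le> arc_len g a x + (u 0 - x)"
        using arc_len_nonneg[OF L, of a] \<open>u 0 = a\<close> by auto
    qed
  next
    case (Suc k)
    show ?case
    proof (intro impI allI)
      fix u :: "nat \<Rightarrow> real" and x
      assume u0: "u 0 = a" and um: "\<forall>i<Suc k. u i \<le> u (Suc i)" and ub: "u (Suc k) \<le> b"
        and x: "a \<le> x \<and> x \<le> u (Suc k)"
      have umk: "\<forall>i<k. u i \<le> u (Suc i)" using um by auto
      have ch: "\<And>i. i \<le> Suc k \<Longrightarrow> u 0 \<le> u i \<and> u i \<le> u (Suc k)"
        using partition_mono_chain[OF um] by blast
      have zk: "a \<le> u k" "u k \<le> u (Suc k)" "u k \<le> b" using ch[of k] u0 ub by auto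
      have lipd: "dist (g s) (g t) \<le> t - s" if "a \<le> s" "s \<le> t" "t \<le> b" for s t
        using lipschitz_onD[OF L, of s t] that by (simp add: dist_real_def)
      show "(\<Sum>i<Suc k. dist (g (u i)) (g (u (Suc i)))) \<le> arc_len g a x + (u (Suc k) - x)"
      proof (cases "x \<le> u k")
        case True
        have "(\<Sum>i<k. dist (g (u i)) (g (u (Suc i)))) \<le> arc_len g a x + (u k - x)"
          using Suc.IH u0 umk zk x True by blast
        moreover have "dist (g (u k)) (g (u (Suc k))) \<le> u (Suc k) - u k"
          using lipd zk ub by auto
        ultimately show ?thesis by simp
      next
        case False
        define u' where "u' = u(Suc k := x)"
        have "(\<Sum>i<Suc k. dist (g (u' i)) (g (u' (Suc i)))) \<in> partition_sums g a x"
          unfolding partition_sums_def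
          by (rule CollectI, rule exI[of _ u'], rule exI[of _ "Suc k"])
             (use u0 um False in \<open>auto simp: u'_def less_Suc_eq\<close>)
        moreover have "(\<Sum>i<Suc k. dist (g (u' i)) (g (u' (Suc i)))) =
            (\<Sum>i<k. dist (g (u i)) (g (u (Suc i)))) + dist (g (u k)) (g x)"
          unfolding u'_def by simp
        ultimately have "(\<Sum>i<k. dist (g (u i)) (g (u (Suc i)))) + dist (g (u k)) (g x) \<le> arc_len g a x"
          unfolding arc_len_def using psum_bdd[OF L, of x] x ub by (metis cSup_upper order.trans)
        moreover have "dist (g (u k)) (g (u (Suc k))) \<le> dist (g (u k)) (g x) + dist (g x) (g (u (Suc k)))"
          by (rule dist_triangle)
        moreover have "dist (g x) (g (u (Suc k))) \<le> u (Suc k) - x"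
          using lipd x ub by auto
        ultimately show ?thesis by simp
      qed
    qed
  qed
  show ?thesis
    unfolding arc_len_def[of g a y]
  proof (rule cSup_least)
    show "partition_sums g a y \<noteq> {}" using psum_nonempty[of a y] assms by auto
    fix z assume "z \<in> partition_sums g a y"
    then obtain u k where z: "z = (\<Sum>i<k. dist (g (u i)) (g (u (Suc i))))" and u: "u 0 = a" "u k = y"
      "\<forall>i<k. u i \<le> u (Suc i)"
      unfolding partition_sums_def by auto
    then show "z \<le> arc_len g a x + (y - x)" using main[of u] assms by auto
  qed
qed

lemma interval_measure_le_lborel:
  fixes F G :: "real \<Rightarrow> real"
  assumes mF: "mono F" and mG: "mono G" and cF: "continuous_on UNIV F" and cG: "continuous_on UNIV G"
    and sum: "\<And>t. F t + G t = t"
  shows "interval_measure F \<le> lborel"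
proof -
  have rcF: "continuous (at_right a) F" for a
    using cF by (simp add: continuous_on_eq_continuous_at continuous_at_imp_continuous_at_within)
  have rcG: "continuous (at_right a) G" for a
    using cG by (simp add: continuous_on_eq_continuous_at continuous_at_imp_continuous_at_within)
  have rcI: "continuous (at_right a) (\<lambda>x::real. x)" for a
    by (simp add: continuous_at_imp_continuous_at_within)
  define \<mu> where "\<mu> = (\<lambda>A. emeasure (interval_measure F) A + emeasure (interval_measure G) A)"
  define M where "M = measure_of UNIV (sets borel) \<mu>"
  have sa: "sigma_algebra UNIV (sets (borel :: real measure))"
    using sets.sigma_algebra_axioms[of "borel :: real measure"] by simp
  have pos: "positive (sets borel) \<mu>" unfolding positive_def \<mu>_def by simp
  have ca: "countably_additive (sets borel) \<mu>"
    unfolding countably_additive_def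
  proof (intro allI impI)
    fix A :: "nat \<Rightarrow> real set"
    assume A: "range A \<subseteq> sets borel" "disjoint_family A" "\<Union> (range A) \<in> sets borel"
    have "(\<Sum>i. \<mu> (A i)) = (\<Sum>i. emeasure (interval_measure F) (A i)) + (\<Sum>i. emeasure (interval_measure G) (A i))"
      unfolding \<mu>_def by (rule suminf_add[symmetric]) auto
    also have "\<dots> = \<mu> (\<Union> (range A))"
      unfolding \<mu>_def using A by (simp add: suminf_emeasure)
    finally show "(\<Sum>i. \<mu> (A i)) = \<mu> (\<Union> (range A))" .
  qed
  have eM: "A \<in> sets borel \<Longrightarrow> emeasure M A = \<mu> A" for A
    unfolding M_def by (rule emeasure_measure_of_sigma[OF sa pos ca])
  have sM: "sets M = sets borel"
    unfolding M_def using sa by (simp add: sets_measure_of sigma_algebra.sigma_sets_eq)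
  define E where "E = range (\<lambda>(a, b). {a <.. b::real})"
  have sE: "sets (borel :: real measure) = sigma_sets UNIV E"
    unfolding E_def by (subst borel_sigma_sets_Ioc) (simp add: sets_measure_of)
  have "interval_measure (\<lambda>x. x) = M"
  proof (rule measure_eqI_generator_eq[where E=E and \<Omega>=UNIV and A="\<lambda>i. {- real i <.. real i}"])
    show "Int_stable E"
      unfolding E_def Int_stable_def
    proof (clarify)
      fix a b c d :: real
      have "{a<..b} \<inter> {c<..d} = {max a c<..min b d}" by auto
      then show "{a<..b} \<inter> {c<..d} \<in> range (\<lambda>(a, b). {a<..b})" by auto
    qed
    show "E \<subseteq> Pow UNIV" by simp
    show "sets (interval_measure (\<lambda>x. x)) = sigma_sets UNIV E" using sE by simp
    show "sets M = sigma_sets UNIV E" using sE sM by simp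
    show "range (\<lambda>i. {- real i<..real i}) \<subseteq> E" unfolding E_def by auto
    show "(\<Union>i. {- real i<..real i}) = UNIV"
    proof (rule set_eqI, rule iffI)
      fix x :: real
      obtain n :: nat where "\<bar>x\<bar> < real n" using reals_Archimedean2 by blast
      then show "x \<in> (\<Union>i. {- real i<..real i})" by (intro UN_I[of n]) auto
    qed simp
    show "emeasure (interval_measure (\<lambda>x. x)) {- real i<..real i} \<noteq> \<infinity>" for i
      by (subst emeasure_interval_measure_Ioc) (auto intro: rcI)
    fix X assume "X \<in> E"
    then obtain a b where X: "X = {a<..b}" unfolding E_def by auto
    show "emeasure (interval_measure (\<lambda>x. x)) X = emeasure M X"
    proof (cases "a \<le> b")
      case True
      have "emeasure M X = \<mu> X" using X by (simp add: eM)
      also have "\<dots> = ennreal (F b - F a) + ennreal (G b - G a)"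
        unfolding \<mu>_def X using True mF mG rcF rcG
        by (simp add: emeasure_interval_measure_Ioc monoD)
      also have "\<dots> = ennreal (b - a)"
        using True mF mG sum[of a] sum[of b]
        by (subst ennreal_plus[symmetric]) (auto simp: monoD algebra_simps)
      finally show ?thesis using True X rcI by (simp add: emeasure_interval_measure_Ioc)
    next
      case False
      then have "X = {}" using X by auto
      then show ?thesis by simp
    qed
  qed
  then have lb: "lborel = M" by (simp add: lborel_eq_real)
  show ?thesis
    unfolding lb
  proof (subst le_measure)
    show "sets (interval_measure F) = sets M" using sM by simp
    show "\<forall>A\<in>sets (interval_measure F). emeasure (interval_measure F) A \<le> emeasure M A"
      by (auto simp: eM \<mu>_def)
  qed
qed

lemma line_integral_lip:
  fixes g :: "real \<Rightarrow> 'a::euclidean_space" and \<rho> :: "'a \<Rightarrow> ennreal"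
  assumes L: "1-lipschitz_on {a..b} g" and ab: "a \<le> b"
  shows "rectifiable_on g a b"
    and "line_integral \<rho> g a b \<le> (\<integral>\<^sup>+t. \<rho> (g t) * indicator {a..b} t \<partial>lborel)"
proof -
  show "rectifiable_on g a b"
    unfolding rectifiable_on_def
    using ab lipschitz_on_continuous_on[OF L] psum_bdd[OF L order_refl] by auto
  define cl where "cl = (\<lambda>t. max a (min b t))"
  have cl: "a \<le> cl t" "cl t \<le> b" for t unfolding cl_def using ab by auto
  have clm: "x \<le> y \<Longrightarrow> cl x \<le> cl y" "x \<le> y \<Longrightarrow> cl y - cl x \<le> y - x" for x y
    unfolding cl_def by auto
  define F where "F = length_fun g a b"
  have F: "F t = arc_len g a (cl t)" for t unfolding F_def length_fun_def cl_def by simp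
  have mF: "mono F"
    by (rule monoI) (simp add: F arc_len_mono[OF L] cl clm)
  have lF: "x \<le> y \<Longrightarrow> F y - F x \<le> y - x" for x y
  proof -
    assume "x \<le> y"
    then have "arc_len g a (cl y) \<le> arc_len g a (cl x) + (cl y - cl x)"
      using arc_len_lip[OF L cl(1)[of x] clm(1) cl(2)[of y]] by blast
    then show ?thesis using clm(2)[OF \<open>x \<le> y\<close>] by (simp add: F)
  qed
  have lF2: "dist (F x) (F y) \<le> 1 * dist x y" for x y
  proof (cases "x \<le> y")
    case True then show ?thesis using lF[of x y] monoD[OF mF True] by (simp add: dist_real_def)
  next
    case False then show ?thesis using lF[of y x] monoD[OF mF, of y x] by (simp add: dist_real_def)
  qed
  have cF: "continuous_on UNIV F"
    by (rule lipschitz_on_continuous_on[of 1]) (auto intro!: lipschitz_onI lF2)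
  define G where "G = (\<lambda>t. t - F t)"
  have mG: "mono G" unfolding G_def by (rule monoI) (use lF in force)
  have cG: "continuous_on UNIV G" unfolding G_def by (intro continuous_intros cF)
  have le: "interval_measure F \<le> lborel"
    by (rule interval_measure_le_lborel[OF mF mG cF cG]) (simp add: G_def)
  show "line_integral \<rho> g a b \<le> (\<integral>\<^sup>+t. \<rho> (g t) * indicator {a..b} t \<partial>lborel)"
    unfolding line_integral_def F_def[symmetric]
    by (rule nn_integral_mono_measure[OF _ le]) simp
qed

lemma young_real:
  fixes p A x :: real
  assumes p: "p > 1" and A: "A > 0" and x: "x \<ge> 0"
  shows "x \<le> A * x powr p + A powr (- 1 / (p - 1))"
proof (cases "A * x powr (p - 1) \<ge> 1")
  case True
  have "x \<le> x * (A * x powr (p - 1))" using True x by (simp add: mult_le_cancel_left1)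
  also have "\<dots> = A * x powr p"
  proof (cases "x = 0")
    case False
    then have "x * x powr (p - 1) = x powr p" using x p by (simp add: powr_mult_base)
    then show ?thesis by (simp add: algebra_simps)
  qed (use p in simp)
  finally show ?thesis using A by (simp add: add_increasing2)
next
  case False
  then have "x powr (p - 1) < 1 / A" using A by (simp add: field_simps mult.commute)
  then have "(x powr (p - 1)) powr (1 / (p - 1)) < (1 / A) powr (1 / (p - 1))"
    using p x by (intro powr_less_mono2) auto
  then have "x < (1 / A) powr (1 / (p - 1))" using p x by (simp add: powr_powr)
  also have "\<dots> = A powr (- 1 / (p - 1))"
    using A by (simp add: powr_divide powr_minus_divide)
  finally show ?thesis using A x by (smt (verit) powr_ge_zero zero_le_mult_iff)
qed

lemma enn_powr_measurable[measurable]: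
  assumes [measurable]: "f \<in> borel_measurable M"
  shows "(\<lambda>x. enn_powr (f x) q) \<in> borel_measurable M"
  unfolding enn_powr_def by measurable

lemma young_enn:
  fixes p A :: real and x :: ennreal
  assumes p: "p > 1" and A: "A > 0"
  shows "x \<le> ennreal A * enn_powr x p + ennreal (A powr (- 1 / (p - 1)))"
proof (cases "x = \<infinity>")
  case True then show ?thesis using A by (simp add: enn_powr_def ennreal_mult_top)
next
  case False
  then obtain y where y: "x = ennreal y" "y \<ge> 0" by (cases x) auto
  have "y \<le> A * y powr p + A powr (- 1 / (p - 1))" by (rule young_real[OF p A y(2)])
  then have "ennreal y \<le> ennreal (A * y powr p + A powr (- 1 / (p - 1)))" by (rule ennreal_leI)
  also have "\<dots> = ennreal A * ennreal (y powr p) + ennreal (A powr (- 1 / (p - 1)))"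
    using A by (simp add: ennreal_plus ennreal_mult)
  finally show ?thesis using y by (simp add: enn_powr_def)
qed

lemma nn_integral_scale:
  fixes f :: "'a::euclidean_space \<Rightarrow> ennreal" and t :: real
  assumes [measurable]: "f \<in> borel_measurable borel" and t: "t > 0"
  shows "(\<integral>\<^sup>+w. f (b + t *\<^sub>R w) \<partial>lborel) = ennreal (t powr (- real DIM('a))) * (\<integral>\<^sup>+z. f z \<partial>lborel)"
proof -
  have "(\<integral>\<^sup>+z. f z \<partial>lborel) = ennreal (t ^ DIM('a)) * (\<integral>\<^sup>+w. f (b + t *\<^sub>R w) \<partial>lborel)"
    using t by (subst lborel_affine[of t b]) (auto simp: nn_integral_density nn_integral_distr nn_integral_cmult)
  moreover have "ennreal (t powr (- real DIM('a))) * ennreal (t ^ DIM('a)) = 1"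
    using t by (simp add: ennreal_mult'[symmetric] powr_minus powr_realpow field_simps)
  ultimately show ?thesis
    by (metis mult.assoc mult_1)
qed

lemma nn_integral_translate:
  fixes f :: "'a::euclidean_space \<Rightarrow> ennreal"
  assumes [measurable]: "f \<in> borel_measurable borel"
  shows "(\<integral>\<^sup>+w. f (w + b) \<partial>lborel) = (\<integral>\<^sup>+z. f z \<partial>lborel)"
  using nn_integral_scale[OF assms, of 1 b] by (simp add: add.commute)

lemma key_inner:
  fixes \<rho> :: "'a::euclidean_space \<Rightarrow> ennreal" and \<phi> :: "'a \<Rightarrow> real" and W :: "'a set"
    and A :: "real \<Rightarrow> real"
  assumes \<rho>m[measurable]: "\<rho> \<in> borel_measurable borel"
    and \<phi>m[measurable]: "\<phi> \<in> borel_measurable borel"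
    and \<phi>L: "\<And>x y. \<bar>\<phi> x - \<phi> y\<bar> \<le> dist x y"
    and Wm[measurable]: "W \<in> sets borel"
    and WR: "\<And>w. w \<in> W \<Longrightarrow> norm (w + c - u) \<le> R"
    and p: "p > 1" and Apos: "\<And>t. 0 < t \<Longrightarrow> 0 < A t"
    and Am[measurable]: "A \<in> borel_measurable borel"
  shows "(\<integral>\<^sup>+w. indicator W w * (\<integral>\<^sup>+t. \<rho> (u + t *\<^sub>R (w + c - u)) * indicator {0<..1} t \<partial>lborel) \<partial>lborel)
    \<le> (\<integral>\<^sup>+t. indicator {0<..1} t * (ennreal (A t * t powr (- real DIM('a))) *
          (\<integral>\<^sup>+z. enn_powr (\<rho> z) p * indicator {z. \<bar>\<phi> z - \<phi> u\<bar> \<le> t * R} z \<partial>lborel)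
         + ennreal (A t powr (- 1 / (p - 1))) * emeasure lborel W) \<partial>lborel)"
proof -
  have "(\<integral>\<^sup>+w. indicator W w * (\<integral>\<^sup>+t. \<rho> (u + t *\<^sub>R (w + c - u)) * indicator {0<..1} t \<partial>lborel) \<partial>lborel)
      = (\<integral>\<^sup>+w. (\<integral>\<^sup>+t. indicator W w * (\<rho> (u + t *\<^sub>R (w + c - u)) * indicator {0<..1} t) \<partial>lborel) \<partial>lborel)"
    by (rule nn_integral_cong, rule nn_integral_cmult[symmetric]) measurable
  also have "\<dots> = (\<integral>\<^sup>+t. (\<integral>\<^sup>+w. indicator W w * (\<rho> (u + t *\<^sub>R (w + c - u)) * indicator {0<..1} t) \<partial>lborel) \<partial>lborel)"
    by (rule lborel_pair.Fubini'[symmetric]) measurable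
  also have "\<dots> \<le> (\<integral>\<^sup>+t. indicator {0<..1} t * (ennreal (A t * t powr (- real DIM('a))) *
          (\<integral>\<^sup>+z. enn_powr (\<rho> z) p * indicator {z. \<bar>\<phi> z - \<phi> u\<bar> \<le> t * R} z \<partial>lborel)
         + ennreal (A t powr (- 1 / (p - 1))) * emeasure lborel W) \<partial>lborel)"
  proof (rule nn_integral_mono)
    fix t :: real
    show "(\<integral>\<^sup>+w. indicator W w * (\<rho> (u + t *\<^sub>R (w + c - u)) * indicator {0<..1} t) \<partial>lborel)
      \<le> indicator {0<..1} t * (ennreal (A t * t powr (- real DIM('a))) *
          (\<integral>\<^sup>+z. enn_powr (\<rho> z) p * indicator {z. \<bar>\<phi> z - \<phi> u\<bar> \<le> t * R} z \<partial>lborel)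
         + ennreal (A t powr (- 1 / (p - 1))) * emeasure lborel W)"
    proof (cases "t \<in> {0<..1}")
      case False then show ?thesis by simp
    next
      case True
      then have t: "0 < t" "t \<le> 1" by auto
      define b where "b = u + t *\<^sub>R (c - u)"
      have xw: "u + t *\<^sub>R (w + c - u) = b + t *\<^sub>R w" for w
        unfolding b_def by (simp add: algebra_simps)
      define f where "f = (\<lambda>z. enn_powr (\<rho> z) p * indicator {z. \<bar>\<phi> z - \<phi> u\<bar> \<le> t * R} z)"
      have fm[measurable]: "f \<in> borel_measurable borel" unfolding f_def by measurable
      have "(\<integral>\<^sup>+w. indicator W w * (\<rho> (u + t *\<^sub>R (w + c - u)) * indicator {0<..1} t) \<partial>lborel)
          = (\<integral>\<^sup>+w. indicator W w * \<rho> (b + t *\<^sub>R w) \<partial>lborel)"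
        using True by (simp add: xw)
      also have "\<dots> \<le> (\<integral>\<^sup>+w. ennreal (A t) * (indicator W w * enn_powr (\<rho> (b + t *\<^sub>R w)) p)
            + ennreal (A t powr (- 1 / (p - 1))) * indicator W w \<partial>lborel)"
      proof (rule nn_integral_mono)
        fix w
        have "\<rho> (b + t *\<^sub>R w) \<le> ennreal (A t) * enn_powr (\<rho> (b + t *\<^sub>R w)) p + ennreal (A t powr (- 1 / (p - 1)))"
          by (rule young_enn[OF p Apos[OF t(1)]])
        then show "indicator W w * \<rho> (b + t *\<^sub>R w) \<le> ennreal (A t) * (indicator W w * enn_powr (\<rho> (b + t *\<^sub>R w)) p)
            + ennreal (A t powr (- 1 / (p - 1))) * indicator W w"
          by (cases "w \<in> W") (auto simp: mult_ac)
      qed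
      also have "\<dots> = ennreal (A t) * (\<integral>\<^sup>+w. indicator W w * enn_powr (\<rho> (b + t *\<^sub>R w)) p \<partial>lborel)
            + ennreal (A t powr (- 1 / (p - 1))) * emeasure lborel W"
        by (subst nn_integral_add) (auto simp: nn_integral_cmult)
      also have "(\<integral>\<^sup>+w. indicator W w * enn_powr (\<rho> (b + t *\<^sub>R w)) p \<partial>lborel) \<le> (\<integral>\<^sup>+w. f (b + t *\<^sub>R w) \<partial>lborel)"
      proof (rule nn_integral_mono)
        fix w
        show "indicator W w * enn_powr (\<rho> (b + t *\<^sub>R w)) p \<le> f (b + t *\<^sub>R w)"
        proof (cases "w \<in> W")
          case True
          have "\<bar>\<phi> (b + t *\<^sub>R w) - \<phi> u\<bar> \<le> dist (b + t *\<^sub>R w) u" by (rule \<phi>L)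
          also have "\<dots> = norm (t *\<^sub>R (w + c - u))" by (simp add: xw[symmetric] dist_norm)
          also have "\<dots> = t * norm (w + c - u)" using t by simp
          also have "\<dots> \<le> t * R" using WR[OF True] t by (simp add: mult_left_mono)
          finally show ?thesis using True by (simp add: f_def)
        qed simp
      qed
      also have "(\<integral>\<^sup>+w. f (b + t *\<^sub>R w) \<partial>lborel) = ennreal (t powr (- real DIM('a))) * (\<integral>\<^sup>+z. f z \<partial>lborel)"
        by (rule nn_integral_scale[OF fm t(1)])
      finally show ?thesis
        using True t Apos[OF t(1)] by (simp add: f_def ennreal_mult mult.assoc add_mono mult_left_mono)
    qed
  qed
  finally show ?thesis .
qed

lemma slab_integral:
  fixes \<rho> :: "'a::euclidean_space \<Rightarrow> ennreal" and \<phi> :: "'a \<Rightarrow> real"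
  assumes [measurable]: "\<rho> \<in> borel_measurable borel" "\<phi> \<in> borel_measurable borel" and a: "a \<ge> 0"
  shows "(\<integral>\<^sup>+s. (\<integral>\<^sup>+z. enn_powr (\<rho> z) p * indicator {z. \<bar>\<phi> z - s\<bar> \<le> a} z \<partial>lborel) \<partial>lborel)
    = ennreal (2 * a) * (\<integral>\<^sup>+z. enn_powr (\<rho> z) p \<partial>lborel)"
proof -
  have "(\<integral>\<^sup>+s. (\<integral>\<^sup>+z. enn_powr (\<rho> z) p * indicator {z. \<bar>\<phi> z - s\<bar> \<le> a} z \<partial>lborel) \<partial>lborel)
     = (\<integral>\<^sup>+z. (\<integral>\<^sup>+s. enn_powr (\<rho> z) p * indicator {z. \<bar>\<phi> z - s\<bar> \<le> a} z \<partial>lborel) \<partial>lborel)"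
    by (rule lborel_pair.Fubini') measurable
  also have "\<dots> = (\<integral>\<^sup>+z. enn_powr (\<rho> z) p * ennreal (2 * a) \<partial>lborel)"
  proof (rule nn_integral_cong)
    fix z
    have "(\<integral>\<^sup>+s. enn_powr (\<rho> z) p * indicator {z. \<bar>\<phi> z - s\<bar> \<le> a} z \<partial>lborel)
        = (\<integral>\<^sup>+s. enn_powr (\<rho> z) p * indicator {\<phi> z - a .. \<phi> z + a} s \<partial>lborel)"
      by (rule nn_integral_cong) (auto simp: indicator_def abs_le_iff)
    also have "\<dots> = enn_powr (\<rho> z) p * ennreal (2 * a)"
      using a by (simp add: nn_integral_cmult_indicator)
    finally show "(\<integral>\<^sup>+s. enn_powr (\<rho> z) p * indicator {z. \<bar>\<phi> z - s\<bar> \<le> a} z \<partial>lborel) = enn_powr (\<rho> z) p * ennreal (2 * a)" .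
  qed
  also have "\<dots> = ennreal (2 * a) * (\<integral>\<^sup>+z. enn_powr (\<rho> z) p \<partial>lborel)"
    by (subst nn_integral_multc) (auto simp: mult.commute)
  finally show ?thesis .
qed

lemma nn_integral_powr_01:
  fixes \<gamma> :: real
  assumes "\<gamma> > -1"
  shows "(\<integral>\<^sup>+t. indicator {0<..1} t * ennreal (t powr \<gamma>) \<partial>lborel) = ennreal (1 / (\<gamma> + 1))"
proof -
  have "((\<lambda>x. x powr \<gamma>) has_integral (1 powr (\<gamma>+1) / (\<gamma>+1))) {0..1}"
    by (rule has_integral_powr_from_0) (use assms in auto)
  then have "((\<lambda>x. x powr \<gamma>) has_integral (1 / (\<gamma>+1))) {0..1}" by simp
  then have "(\<integral>\<^sup>+t. indicator {0..1} t * ennreal (t powr \<gamma>) \<partial>lborel) = ennreal (1 / (\<gamma> + 1))"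
    by (subst nn_integral_has_integral_lebesgue[symmetric]) (auto simp: ennreal_mult' indicator_def intro!: nn_integral_cong)
  moreover have "(\<integral>\<^sup>+t. indicator {0..1} t * ennreal (t powr \<gamma>) \<partial>lborel) = (\<integral>\<^sup>+t. indicator {0<..1} t * ennreal (t powr \<gamma>) \<partial>lborel)"
  proof (rule nn_integral_cong_AE)
    have "AE t in lborel. t \<noteq> 0" by (rule AE_lborel_singleton)
    then show "AE t in lborel. indicator {0..1} t * ennreal (t powr \<gamma>) = indicator {0<..1} t * ennreal (t powr \<gamma>)"
      by eventually_elim (auto simp: indicator_def)
  qed
  ultimately show ?thesis by simp
qed

lemma key_outer:
  fixes \<rho> :: "'a::euclidean_space \<Rightarrow> ennreal" and \<phi> :: "'a \<Rightarrow> real"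
  assumes [measurable]: "\<rho> \<in> borel_measurable borel" "\<phi> \<in> borel_measurable borel"
    and R: "R > 0" and d: "d \<ge> 0" and \<Lambda>: "\<Lambda> > 0" and p: "p > 1"
    and \<alpha>1: "\<alpha> - real DIM('a) + 1 > -1" and \<alpha>2: "\<alpha> / (p - 1) < 1"
  shows "(\<integral>\<^sup>+s. indicator {0..d} s * (\<integral>\<^sup>+t. indicator {0<..1} t *
            (ennreal ((\<Lambda> * t powr \<alpha>) * t powr (- real DIM('a))) *
              (\<integral>\<^sup>+z. enn_powr (\<rho> z) p * indicator {z. \<bar>\<phi> z - s\<bar> \<le> t * R} z \<partial>lborel)
             + ennreal ((\<Lambda> * t powr \<alpha>) powr (- 1 / (p - 1))) * mW) \<partial>lborel) \<partial>lborel)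
    \<le> ennreal (\<Lambda> * 2 * R / (\<alpha> - real DIM('a) + 2)) * (\<integral>\<^sup>+z. enn_powr (\<rho> z) p \<partial>lborel)
      + ennreal (\<Lambda> powr (- 1 / (p - 1)) * d / (1 - \<alpha> / (p - 1))) * mW"
proof -
  let ?n = "real DIM('a)"
  let ?N = "\<integral>\<^sup>+z. enn_powr (\<rho> z) p \<partial>lborel"
  define S where "S = (\<lambda>s t. \<integral>\<^sup>+z. enn_powr (\<rho> z) p * indicator {z. \<bar>\<phi> z - s\<bar> \<le> t * R} z \<partial>lborel)"
  have Sm[measurable]: "case_prod S \<in> borel_measurable (lborel \<Otimes>\<^sub>M lborel)"
    unfolding S_def by measurable
  have "(\<integral>\<^sup>+s. indicator {0..d} s * (\<integral>\<^sup>+t. indicator {0<..1} t *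
            (ennreal ((\<Lambda> * t powr \<alpha>) * t powr (- ?n)) * S s t
             + ennreal ((\<Lambda> * t powr \<alpha>) powr (- 1 / (p - 1))) * mW) \<partial>lborel) \<partial>lborel)
      = (\<integral>\<^sup>+s. (\<integral>\<^sup>+t. indicator {0..d} s * (indicator {0<..1} t *
            (ennreal ((\<Lambda> * t powr \<alpha>) * t powr (- ?n)) * S s t
             + ennreal ((\<Lambda> * t powr \<alpha>) powr (- 1 / (p - 1))) * mW)) \<partial>lborel) \<partial>lborel)"
    by (rule nn_integral_cong, rule nn_integral_cmult[symmetric]) measurable
  also have "\<dots> = (\<integral>\<^sup>+t. (\<integral>\<^sup>+s. indicator {0..d} s * (indicator {0<..1} t *
            (ennreal ((\<Lambda> * t powr \<alpha>) * t powr (- ?n)) * S s t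
             + ennreal ((\<Lambda> * t powr \<alpha>) powr (- 1 / (p - 1))) * mW)) \<partial>lborel) \<partial>lborel)"
    by (rule lborel_pair.Fubini'[symmetric]) measurable
  also have "\<dots> \<le> (\<integral>\<^sup>+t. ?N * (indicator {0<..1} t * ennreal (\<Lambda> * 2 * R * t powr (\<alpha> - ?n + 1)))
       + mW * (indicator {0<..1} t * ennreal (\<Lambda> powr (- 1 / (p - 1)) * d * t powr (- \<alpha> / (p - 1)))) \<partial>lborel)"
  proof (rule nn_integral_mono)
    fix t :: real
    show "(\<integral>\<^sup>+s. indicator {0..d} s * (indicator {0<..1} t *
            (ennreal ((\<Lambda> * t powr \<alpha>) * t powr (- ?n)) * S s t
             + ennreal ((\<Lambda> * t powr \<alpha>) powr (- 1 / (p - 1))) * mW)) \<partial>lborel)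
       \<le> ?N * (indicator {0<..1} t * ennreal (\<Lambda> * 2 * R * t powr (\<alpha> - ?n + 1)))
       + mW * (indicator {0<..1} t * ennreal (\<Lambda> powr (- 1 / (p - 1)) * d * t powr (- \<alpha> / (p - 1))))"
    proof (cases "t \<in> {0<..1}")
      case False then show ?thesis by simp
    next
      case True
      then have t: "t > 0" by simp
      have e1: "(\<Lambda> * t powr \<alpha>) * t powr (- ?n) * (2 * (t * R)) = \<Lambda> * 2 * R * t powr (\<alpha> - ?n + 1)"
      proof -
        have "t powr (\<alpha> - ?n + 1) = t powr \<alpha> * t powr (- ?n) * t"
          using t by (simp add: powr_add[symmetric] powr_add)
        then show ?thesis by (simp add: field_simps)
      qed
      have e2: "(\<Lambda> * t powr \<alpha>) powr (- 1 / (p - 1)) = \<Lambda> powr (- 1 / (p - 1)) * t powr (- \<alpha> / (p - 1))"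
        using t \<Lambda> by (simp add: powr_mult powr_powr)
      have "(\<integral>\<^sup>+s. indicator {0..d} s * (indicator {0<..1} t *
            (ennreal ((\<Lambda> * t powr \<alpha>) * t powr (- ?n)) * S s t
             + ennreal ((\<Lambda> * t powr \<alpha>) powr (- 1 / (p - 1))) * mW)) \<partial>lborel)
          \<le> (\<integral>\<^sup>+s. ennreal ((\<Lambda> * t powr \<alpha>) * t powr (- ?n)) * S s t
             + ennreal ((\<Lambda> * t powr \<alpha>) powr (- 1 / (p - 1))) * mW * indicator {0..d} s \<partial>lborel)"
        using True by (intro nn_integral_mono) (auto simp: indicator_def)
      also have "\<dots> = ennreal ((\<Lambda> * t powr \<alpha>) * t powr (- ?n)) * (\<integral>\<^sup>+s. S s t \<partial>lborel)
             + ennreal ((\<Lambda> * t powr \<alpha>) powr (- 1 / (p - 1))) * mW * ennreal d"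
        using d by (subst nn_integral_add) (auto simp: nn_integral_cmult)
      also have "(\<integral>\<^sup>+s. S s t \<partial>lborel) = ennreal (2 * (t * R)) * ?N"
        unfolding S_def by (rule slab_integral) (use t R in auto)
      finally have le: "(\<integral>\<^sup>+s. indicator {0..d} s * (indicator {0<..1} t *
            (ennreal ((\<Lambda> * t powr \<alpha>) * t powr (- ?n)) * S s t
             + ennreal ((\<Lambda> * t powr \<alpha>) powr (- 1 / (p - 1))) * mW)) \<partial>lborel)
         \<le> ennreal ((\<Lambda> * t powr \<alpha>) * t powr (- ?n)) * (ennreal (2 * (t * R)) * ?N)
             + ennreal ((\<Lambda> * t powr \<alpha>) powr (- 1 / (p - 1))) * mW * ennreal d" .
      have r1: "ennreal ((\<Lambda> * t powr \<alpha>) * t powr (- ?n)) * (ennreal (2 * (t * R)) * ?N)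
          = ?N * ennreal (\<Lambda> * 2 * R * t powr (\<alpha> - ?n + 1))"
      proof -
        have "ennreal ((\<Lambda> * t powr \<alpha>) * t powr (- ?n)) * ennreal (2 * (t * R))
            = ennreal ((\<Lambda> * t powr \<alpha>) * t powr (- ?n) * (2 * (t * R)))"
          using t R \<Lambda> by (simp add: ennreal_mult)
        then have "ennreal ((\<Lambda> * t powr \<alpha>) * t powr (- ?n)) * ennreal (2 * (t * R))
            = ennreal (\<Lambda> * 2 * R * t powr (\<alpha> - ?n + 1))" unfolding e1 .
        then show ?thesis by (metis mult.assoc mult.commute)
      qed
      have r2: "ennreal ((\<Lambda> * t powr \<alpha>) powr (- 1 / (p - 1))) * mW * ennreal d
          = mW * ennreal (\<Lambda> powr (- 1 / (p - 1)) * d * t powr (- \<alpha> / (p - 1)))"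
      proof -
        have "ennreal ((\<Lambda> * t powr \<alpha>) powr (- 1 / (p - 1))) * ennreal d
            = ennreal ((\<Lambda> * t powr \<alpha>) powr (- 1 / (p - 1)) * d)"
          using d by (simp add: ennreal_mult)
        then have "ennreal ((\<Lambda> * t powr \<alpha>) powr (- 1 / (p - 1))) * ennreal d
            = ennreal (\<Lambda> powr (- 1 / (p - 1)) * d * t powr (- \<alpha> / (p - 1)))"
          unfolding e2 by (simp add: mult_ac)
        then show ?thesis by (metis mult.assoc mult.commute)
      qed
      show ?thesis using le True unfolding r1 r2 by simp
    qed
  qed
  also have "\<dots> = ?N * (\<integral>\<^sup>+t. indicator {0<..1} t * ennreal (\<Lambda> * 2 * R * t powr (\<alpha> - ?n + 1)) \<partial>lborel)
      + mW * (\<integral>\<^sup>+t. indicator {0<..1} t * ennreal (\<Lambda> powr (- 1 / (p - 1)) * d * t powr (- \<alpha> / (p - 1))) \<partial>lborel)"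
    by (subst nn_integral_add) (auto simp: nn_integral_cmult)
  also have "(\<integral>\<^sup>+t. indicator {0<..1} t * ennreal (\<Lambda> * 2 * R * t powr (\<alpha> - ?n + 1)) \<partial>lborel)
      = ennreal (\<Lambda> * 2 * R) * (\<integral>\<^sup>+t. indicator {0<..1} t * ennreal (t powr (\<alpha> - ?n + 1)) \<partial>lborel)"
    using \<Lambda> R by (subst nn_integral_cmult[symmetric]) (auto simp: ennreal_mult' mult_ac intro!: nn_integral_cong)
  also have "(\<integral>\<^sup>+t. indicator {0<..1} t * ennreal (t powr (\<alpha> - ?n + 1)) \<partial>lborel) = ennreal (1 / (\<alpha> - ?n + 1 + 1))"
    by (rule nn_integral_powr_01) (use \<alpha>1 in simp)
  also have "(\<integral>\<^sup>+t. indicator {0<..1} t * ennreal (\<Lambda> powr (- 1 / (p - 1)) * d * t powr (- \<alpha> / (p - 1))) \<partial>lborel)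
      = ennreal (\<Lambda> powr (- 1 / (p - 1)) * d) * (\<integral>\<^sup>+t. indicator {0<..1} t * ennreal (t powr (- \<alpha> / (p - 1))) \<partial>lborel)"
    using \<Lambda> d by (subst nn_integral_cmult[symmetric]) (auto simp: ennreal_mult' mult_ac intro!: nn_integral_cong)
  also have "(\<integral>\<^sup>+t. indicator {0<..1} t * ennreal (t powr (- \<alpha> / (p - 1))) \<partial>lborel) = ennreal (1 / (- \<alpha> / (p - 1) + 1))"
    by (rule nn_integral_powr_01) (use \<alpha>2 in simp)
  finally show ?thesis
    using \<Lambda> R d \<alpha>1 \<alpha>2
    by (simp add: S_def ennreal_mult'[symmetric] mult_ac field_simps)
qed

lemma polynomial_lipschitz01:
  fixes P :: "real \<Rightarrow> 'a::euclidean_space"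
  assumes "polynomial_function P"
  obtains B where "B > 0" "B-lipschitz_on {0..1} P"
proof -
  obtain P' where P': "polynomial_function P'" "\<And>x. (P has_vector_derivative (P' x)) (at x)"
    using has_vector_derivative_polynomial_function[OF assms] by blast
  have "compact (P' ` {0..1})"
    by (rule compact_continuous_image) (auto intro: continuous_on_polymonial_function[OF P'(1)])
  then obtain B0 where B0: "\<And>x. x \<in> {0..1} \<Longrightarrow> norm (P' x) \<le> B0"
    by (meson compact_imp_bounded bounded_iff image_eqI)
  define B where "B = max B0 1"
  have "norm (P x - P y) \<le> B * norm (x - y)" if "x \<in> {0..1}" "y \<in> {0..1}" for x y
  proof (rule differentiable_bound[where f' = "\<lambda>x h. h *\<^sub>R P' x" and S="{0..1}"])
    show "convex {0..1::real}" by simp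
    show "(P has_derivative (\<lambda>h. h *\<^sub>R P' x)) (at x within {0..1})" for x
      using P'(2)[of x] by (simp add: has_vector_derivative_def has_derivative_at_withinI)
    show "onorm (\<lambda>h. h *\<^sub>R P' x) \<le> B" if "x \<in> {0..1}" for x
      using onorm_scaleR_left[OF bounded_linear_ident, of "P' x"] B0[OF that]
      by (simp add: B_def onorm_id)
  qed (use that in auto)
  then have "B-lipschitz_on {0..1} P"
    unfolding B_def by (intro lipschitz_onI) (auto simp: dist_norm)
  moreover have "B > 0" unfolding B_def by simp
  ultimately show ?thesis using that by blast
qed

lemma ind01_AE:
  fixes f :: "real \<Rightarrow> ennreal"
  shows "(\<integral>\<^sup>+t. f t * indicator {0..1} t \<partial>lborel) = (\<integral>\<^sup>+t. f t * indicator {0<..1} t \<partial>lborel)"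
proof (rule nn_integral_cong_AE)
  have "AE t in lborel. t \<noteq> 0" by (rule AE_lborel_singleton)
  then show "AE t in lborel. f t * indicator {0..1} t = f t * indicator {0<..1} t"
    by eventually_elim (auto simp: indicator_def)
qed

lemma middle_bound:
  fixes \<rho> :: "'a::euclidean_space \<Rightarrow> ennreal" and Q :: "real \<Rightarrow> 'a"
  assumes [measurable]: "\<rho> \<in> borel_measurable borel" "Q \<in> borel_measurable borel" "W \<in> sets borel"
    and \<Lambda>: "\<Lambda> > 0" and p: "p > 1"
  shows "(\<integral>\<^sup>+w. indicator W w * (\<integral>\<^sup>+t. \<rho> (w + Q t) * indicator {0..1} t \<partial>lborel) \<partial>lborel)
    \<le> ennreal \<Lambda> * (\<integral>\<^sup>+z. enn_powr (\<rho> z) p \<partial>lborel) + ennreal (\<Lambda> powr (- 1 / (p - 1))) * emeasure lborel W"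
proof -
  let ?N = "\<integral>\<^sup>+z. enn_powr (\<rho> z) p \<partial>lborel"
  have "(\<integral>\<^sup>+w. indicator W w * (\<integral>\<^sup>+t. \<rho> (w + Q t) * indicator {0..1} t \<partial>lborel) \<partial>lborel)
      = (\<integral>\<^sup>+w. (\<integral>\<^sup>+t. indicator W w * (\<rho> (w + Q t) * indicator {0..1} t) \<partial>lborel) \<partial>lborel)"
    by (rule nn_integral_cong, rule nn_integral_cmult[symmetric]) measurable
  also have "\<dots> = (\<integral>\<^sup>+t. (\<integral>\<^sup>+w. indicator W w * (\<rho> (w + Q t) * indicator {0..1} t) \<partial>lborel) \<partial>lborel)"
    by (rule lborel_pair.Fubini'[symmetric]) measurable
  also have "\<dots> \<le> (\<integral>\<^sup>+t. (ennreal \<Lambda> * ?N + ennreal (\<Lambda> powr (- 1 / (p - 1))) * emeasure lborel W) * indicator {0..1} (t::real) \<partial>lborel)"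
  proof (rule nn_integral_mono)
    fix t
    show "(\<integral>\<^sup>+w. indicator W w * (\<rho> (w + Q t) * indicator {0..1} t) \<partial>lborel)
       \<le> (ennreal \<Lambda> * ?N + ennreal (\<Lambda> powr (- 1 / (p - 1))) * emeasure lborel W) * indicator {0..1} t"
    proof (cases "t \<in> {0..1}")
      case False then show ?thesis by simp
    next
      case True
      have "(\<integral>\<^sup>+w. indicator W w * (\<rho> (w + Q t) * indicator {0..1} t) \<partial>lborel)
          \<le> (\<integral>\<^sup>+w. ennreal \<Lambda> * enn_powr (\<rho> (w + Q t)) p + ennreal (\<Lambda> powr (- 1 / (p - 1))) * indicator W w \<partial>lborel)"
      proof (rule nn_integral_mono)
        fix w
        have "\<rho> (w + Q t) \<le> ennreal \<Lambda> * enn_powr (\<rho> (w + Q t)) p + ennreal (\<Lambda> powr (- 1 / (p - 1)))"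
          by (rule young_enn[OF p \<Lambda>])
        then show "indicator W w * (\<rho> (w + Q t) * indicator {0..1} t)
            \<le> ennreal \<Lambda> * enn_powr (\<rho> (w + Q t)) p + ennreal (\<Lambda> powr (- 1 / (p - 1))) * indicator W w"
          using True by (cases "w \<in> W") auto
      qed
      also have "\<dots> = ennreal \<Lambda> * (\<integral>\<^sup>+w. enn_powr (\<rho> (w + Q t)) p \<partial>lborel) + ennreal (\<Lambda> powr (- 1 / (p - 1))) * emeasure lborel W"
        by (subst nn_integral_add) (auto simp: nn_integral_cmult)
      also have "(\<integral>\<^sup>+w. enn_powr (\<rho> (w + Q t)) p \<partial>lborel) = ?N"
        by (rule nn_integral_translate[of "\<lambda>z. enn_powr (\<rho> z) p"]) measurable
      finally show ?thesis using True by simp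
    qed
  qed
  also have "\<dots> = ennreal \<Lambda> * ?N + ennreal (\<Lambda> powr (- 1 / (p - 1))) * emeasure lborel W"
    by (subst nn_integral_cmult_indicator) auto
  finally show ?thesis .
qed

lemma segment_lipschitz:
  fixes u w :: "'a::real_normed_vector"
  shows "(norm (w - u))-lipschitz_on S (\<lambda>t. u + t *\<^sub>R (w - u))"
proof (rule lipschitz_onI)
  fix x y :: real
  have "dist (u + x *\<^sub>R (w - u)) (u + y *\<^sub>R (w - u)) = norm ((x - y) *\<^sub>R (w - u))"
    by (simp add: dist_norm algebra_simps)
  then show "dist (u + x *\<^sub>R (w - u)) (u + y *\<^sub>R (w - u)) \<le> norm (w - u) * dist x y"
    by (simp add: dist_real_def mult.commute)
qed simp

lemma three_piece:
  fixes \<rho> :: "'a::euclidean_space \<Rightarrow> ennreal" and p1 p2 q3 :: "real \<Rightarrow> 'a"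
  assumes [measurable]: "\<rho> \<in> borel_measurable borel" "p1 \<in> borel_measurable borel"
    "p2 \<in> borel_measurable borel" "q3 \<in> borel_measurable borel"
    and K: "K > 0"
    and L1: "K-lipschitz_on {0..1} p1" and L2: "K-lipschitz_on {0..1} p2" and L3: "K-lipschitz_on {0..1} q3"
    and j1: "p1 1 = p2 0" and j2: "p2 1 = q3 1"
    and E: "p1 0 \<in> E" and F: "q3 0 \<in> F"
    and D1: "\<And>t. 0 < t \<Longrightarrow> t \<le> 1 \<Longrightarrow> p1 t \<in> G"
    and D2: "\<And>t. 0 \<le> t \<Longrightarrow> t \<le> 1 \<Longrightarrow> p2 t \<in> G"
    and D3: "\<And>t. 0 < t \<Longrightarrow> t \<le> 1 \<Longrightarrow> q3 t \<in> G"
    and adm: "\<forall>(g, s, t) \<in> path_family E F G. rectifiable_on g s t \<longrightarrow> 1 \<le> line_integral \<rho> g s t"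
  shows "1 \<le> ennreal K * ((\<integral>\<^sup>+t. \<rho> (p1 t) * indicator {0..1} t \<partial>lborel)
      + (\<integral>\<^sup>+t. \<rho> (p2 t) * indicator {0..1} t \<partial>lborel) + (\<integral>\<^sup>+t. \<rho> (q3 t) * indicator {0..1} t \<partial>lborel))"
proof -
  define g where "g = (\<lambda>t::real. if t \<le> 1 then p1 t else if t \<le> 2 then p2 (t - 1) else q3 (3 - t))"
  have gm[measurable]: "g \<in> borel_measurable borel" unfolding g_def by measurable
  have L2': "K-lipschitz_on {1..2} (\<lambda>t. p2 (t - 1))"
  proof (rule lipschitz_onI)
    fix x y :: real assume "x \<in> {1..2}" "y \<in> {1..2}"
    then show "dist (p2 (x - 1)) (p2 (y - 1)) \<le> K * dist x y"
      using lipschitz_onD[OF L2, of "x - 1" "y - 1"] by (simp add: dist_real_def)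
  qed (use K in simp)
  have L3': "K-lipschitz_on {2..3} (\<lambda>t. q3 (3 - t))"
  proof (rule lipschitz_onI)
    fix x y :: real assume "x \<in> {2..3}" "y \<in> {2..3}"
    then show "dist (q3 (3 - x)) (q3 (3 - y)) \<le> K * dist x y"
      using lipschitz_onD[OF L3, of "3 - x" "3 - y"] by (simp add: dist_real_def abs_minus_commute)
  qed (use K in simp)
  have L23: "K-lipschitz_on {1..3} (\<lambda>t. if t \<le> 2 then p2 (t - 1) else q3 (3 - t))"
    by (rule lipschitz_on_concat[OF L2' L3']) (simp add: j2)
  have Lg: "K-lipschitz_on {0..3} g"
    unfolding g_def
    by (rule lipschitz_on_concat[OF L1 L23, simplified]) (simp add: j1)
  define g' where "g' = (\<lambda>t. g (t / K))"
  have Lg': "1-lipschitz_on {0..3 * K} g'"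
  proof (rule lipschitz_onI)
    fix x y :: real assume xy: "x \<in> {0..3 * K}" "y \<in> {0..3 * K}"
    have "x / K \<le> 3" using xy K by (simp add: divide_le_eq)
    moreover have "y / K \<le> 3" using xy K by (simp add: divide_le_eq)
    ultimately have "x / K \<in> {0..3}" "y / K \<in> {0..3}" using xy K by auto
    then have "dist (g (x / K)) (g (y / K)) \<le> K * dist (x / K) (y / K)"
      by (rule lipschitz_onD[OF Lg])
    also have "K * dist (x / K) (y / K) = dist x y"
    proof -
      have "dist (x / K) (y / K) = \<bar>x - y\<bar> / K"
        using K unfolding dist_real_def diff_divide_distrib[symmetric] by (simp add: abs_divide)
      then show ?thesis using K by (simp add: dist_real_def)
    qed
    finally show "dist (g' x) (g' y) \<le> 1 * dist x y" by (simp add: g'_def)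
  qed simp
  have mem: "(g', 0, 3 * K) \<in> path_family E F G"
    unfolding path_family_def
  proof (intro CollectI, simp only: prod.case, intro conjI allI impI)
    show "0 < 3 * K" using K by simp
    show "continuous_on {0..3 * K} g'" by (rule lipschitz_on_continuous_on[OF Lg'])
    show "g' 0 \<in> E" using E by (simp add: g'_def g_def)
    show "g' (3 * K) \<in> F" using F K by (simp add: g'_def g_def)
    fix \<tau> assume "0 < \<tau> \<and> \<tau> < 3 * K"
    then have t: "0 < \<tau> / K" "\<tau> / K < 3" using K by (auto simp: field_simps)
    show "g' \<tau> \<in> G"
      unfolding g'_def g_def using t D1[of "\<tau> / K"] D2[of "\<tau> / K - 1"] D3[of "3 - \<tau> / K"] by auto
  qed
  have "1 \<le> line_integral \<rho> g' 0 (3 * K)"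
    using adm mem line_integral_lip(1)[OF Lg'] K by fastforce
  also have "\<dots> \<le> (\<integral>\<^sup>+t. \<rho> (g' t) * indicator {0..3 * K} t \<partial>lborel)"
    by (rule line_integral_lip(2)[OF Lg']) (use K in simp)
  also have "\<dots> = ennreal K * (\<integral>\<^sup>+x. \<rho> (g x) * indicator {0..3} x \<partial>lborel)"
  proof -
    have "(\<integral>\<^sup>+t. \<rho> (g' t) * indicator {0..3 * K} t \<partial>lborel)
        = ennreal \<bar>K\<bar> * (\<integral>\<^sup>+x. \<rho> (g' (0 + K * x)) * indicator {0..3 * K} (0 + K * x) \<partial>lborel)"
      unfolding g'_def by (rule nn_integral_real_affine) (use K in auto)
    also have "(\<integral>\<^sup>+x. \<rho> (g' (0 + K * x)) * indicator {0..3 * K} (0 + K * x) \<partial>lborel)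
        = (\<integral>\<^sup>+x. \<rho> (g x) * indicator {0..3} x \<partial>lborel)"
      using K by (intro nn_integral_cong) (auto simp: g'_def indicator_def zero_le_mult_iff)
    finally show ?thesis using K by simp
  qed
  also have "(\<integral>\<^sup>+x. \<rho> (g x) * indicator {0..3} x \<partial>lborel)
      \<le> (\<integral>\<^sup>+x. \<rho> (p1 x) * indicator {0..1} x + \<rho> (p2 (x - 1)) * indicator {1..2} x
            + \<rho> (q3 (3 - x)) * indicator {2..3} x \<partial>lborel)"
    by (intro nn_integral_mono) (auto simp: g_def indicator_def)
  also have "\<dots> = (\<integral>\<^sup>+x. \<rho> (p1 x) * indicator {0..1} x \<partial>lborel) + (\<integral>\<^sup>+x. \<rho> (p2 (x - 1)) * indicator {1..2} x \<partial>lborel)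
            + (\<integral>\<^sup>+x. \<rho> (q3 (3 - x)) * indicator {2..3} x \<partial>lborel)"
  proof -
    have m1: "(\<lambda>x. \<rho> (p1 x) * indicator {0..1} x) \<in> borel_measurable lborel" by measurable
    have m2: "(\<lambda>x. \<rho> (p2 (x - 1)) * indicator {1..2} x) \<in> borel_measurable lborel" by measurable
    have m3: "(\<lambda>x. \<rho> (q3 (3 - x)) * indicator {2..3} x) \<in> borel_measurable lborel" by measurable
    show ?thesis
      by (subst nn_integral_add[OF borel_measurable_add[OF m1 m2] m3], subst nn_integral_add[OF m1 m2]) (rule refl)
  qed
  also have "(\<integral>\<^sup>+x. \<rho> (p2 (x - 1)) * indicator {1..2} x \<partial>lborel) = (\<integral>\<^sup>+t. \<rho> (p2 t) * indicator {0..1} t \<partial>lborel)"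
  proof -
    have "(\<integral>\<^sup>+x. \<rho> (p2 (x - 1)) * indicator {1..2} x \<partial>lborel)
        = ennreal \<bar>1\<bar> * (\<integral>\<^sup>+x. \<rho> (p2 ((1 + 1 * x) - 1)) * indicator {1..2} (1 + 1 * x) \<partial>lborel)"
      by (rule nn_integral_real_affine) auto
    also have "\<dots> = (\<integral>\<^sup>+t. \<rho> (p2 t) * indicator {0..1} t \<partial>lborel)"
      by (simp add: indicator_def)
    finally show ?thesis .
  qed
  also have "(\<integral>\<^sup>+x. \<rho> (q3 (3 - x)) * indicator {2..3} x \<partial>lborel) = (\<integral>\<^sup>+t. \<rho> (q3 t) * indicator {0..1} t \<partial>lborel)"
  proof -
    have "(\<integral>\<^sup>+x. \<rho> (q3 (3 - x)) * indicator {2..3} x \<partial>lborel)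
        = ennreal \<bar>-1\<bar> * (\<integral>\<^sup>+x. \<rho> (q3 (3 - (3 + (-1) * x))) * indicator {2..3} (3 + (-1) * x) \<partial>lborel)"
      by (rule nn_integral_real_affine) auto
    also have "\<dots> = (\<integral>\<^sup>+t. \<rho> (q3 t) * indicator {0..1} t \<partial>lborel)"
      by (simp only: abs_neg_one ennreal_1 mult_1, rule nn_integral_cong) (auto simp: indicator_def)
    finally show ?thesis .
  qed
  finally show ?thesis by (simp add: mult_left_mono)
qed

lemma seg_in_convex:
  fixes u w :: "'a::real_normed_vector"
  assumes "convex S" "u \<in> S" "w \<in> S" "0 \<le> t" "t \<le> 1"
  shows "u + t *\<^sub>R (w - u) \<in> S"
proof -
  have "(1 - t) *\<^sub>R u + t *\<^sub>R w \<in> S" using assms by (intro convexD) auto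
  moreover have "(1 - t) *\<^sub>R u + t *\<^sub>R w = u + t *\<^sub>R (w - u)" by (simp add: algebra_simps)
  ultimately show ?thesis by simp
qed

lemma chordal_le_dist:
  fixes x y :: "'a::real_normed_vector"
  shows "chordal x y \<le> dist x y"
proof -
  have d1: "1 \<le> sqrt (1 + (norm x)\<^sup>2)" "1 \<le> sqrt (1 + (norm y)\<^sup>2)" by auto
  then have "1 \<le> sqrt (1 + (norm x)\<^sup>2) * sqrt (1 + (norm y)\<^sup>2)"
    by (metis mult_mono' mult_1 zero_le_one)
  then show ?thesis
    unfolding chordal_def dist_norm by (simp add: divide_le_eq_1 divide_le_cancel order_trans[OF _ mult_left_mono] field_simps)
      (metis mult_left_mono mult.right_neutral norm_ge_zero)
qed

lemma far_points:
  fixes C :: "'a::real_normed_vector set"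
  assumes "C \<noteq> {}" "chordal_diam C \<ge> r" "r > 0"
  obtains x y where "x \<in> C" "y \<in> C" "dist x y > r / 2"
proof -
  have "\<exists>x\<in>C. \<exists>y\<in>C. chordal x y > r / 2"
  proof (rule ccontr)
    assume "\<not> ?thesis"
    then have "\<forall>x\<in>C. \<forall>y\<in>C. chordal x y \<le> r / 2" by (simp add: not_less)
    then have "\<forall>z \<in> {chordal x y | x y. x \<in> C \<and> y \<in> C}. z \<le> r / 2" by blast
    moreover have "{chordal x y | x y. x \<in> C \<and> y \<in> C} \<noteq> {}" using assms(1) by auto
    ultimately have "chordal_diam C \<le> r / 2" unfolding chordal_diam_def by (intro cSup_least) auto
    then show False using assms by simp
  qed
  then obtain x y where "x \<in> C" "y \<in> C" "chordal x y > r / 2" by auto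
  then show ?thesis using that chordal_le_dist[of x y] by force
qed

lemma dist_ivt:
  fixes C :: "'a::real_normed_vector set"
  assumes "connected C" "x \<in> C" "y \<in> C" "0 \<le> s" "s \<le> dist x y"
  shows "\<exists>u\<in>C. dist x u = s"
proof -
  have "connected ((\<lambda>z. dist x z) ` C)"
    by (rule connected_continuous_image) (auto intro!: continuous_intros assms)
  then have "{dist x x .. dist x y} \<subseteq> (\<lambda>z. dist x z) ` C"
    by (rule connected_contains_Icc) (use assms in auto)
  then show ?thesis using assms by auto
qed

lemma integrate_two:
  fixes Q1 Q3 :: "real \<Rightarrow> ennreal" and mW M X1 X3 :: ennreal and K :: ennreal
  assumes pw: "\<And>s \<sigma>. s \<in> {0..d0} \<Longrightarrow> \<sigma> \<in> {0..\<delta>} \<Longrightarrow> mW \<le> K * (Q1 s + M + Q3 \<sigma>)"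
    and [measurable]: "Q1 \<in> borel_measurable borel" "Q3 \<in> borel_measurable borel"
    and X1: "(\<integral>\<^sup>+s. indicator {0..d0} s * Q1 s \<partial>lborel) \<le> X1"
    and X3: "(\<integral>\<^sup>+s. indicator {0..\<delta>} s * Q3 s \<partial>lborel) \<le> X3"
    and d0: "d0 \<ge> 0" and \<delta>: "\<delta> \<ge> 0"
  shows "ennreal \<delta> * (ennreal d0 * mW) \<le> K * (ennreal \<delta> * (X1 + ennreal d0 * M) + ennreal d0 * X3)"
proof -
  have step1: "ennreal d0 * mW \<le> K * (X1 + ennreal d0 * M + ennreal d0 * Q3 \<sigma>)" if \<sigma>: "\<sigma> \<in> {0..\<delta>}" for \<sigma>
  proof -
    have "ennreal d0 * mW = (\<integral>\<^sup>+s. mW * indicator {0..d0} s \<partial>lborel)"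
      using d0 by (simp add: nn_integral_cmult_indicator mult.commute)
    also have "\<dots> \<le> (\<integral>\<^sup>+s. K * (indicator {0..d0} s * Q1 s) + (K * (M + Q3 \<sigma>)) * indicator {0..d0} s \<partial>lborel)"
    proof (rule nn_integral_mono)
      fix s
      show "mW * indicator {0..d0} s \<le> K * (indicator {0..d0} s * Q1 s) + (K * (M + Q3 \<sigma>)) * indicator {0..d0} s"
        using pw[OF _ \<sigma>, of s] by (cases "s \<in> {0..d0}") (auto simp: algebra_simps)
    qed
    also have "\<dots> = K * (\<integral>\<^sup>+s. indicator {0..d0} s * Q1 s \<partial>lborel) + (K * (M + Q3 \<sigma>)) * ennreal d0"
      using d0 by (subst nn_integral_add) (auto simp: nn_integral_cmult nn_integral_cmult_indicator)
    also have "\<dots> \<le> K * X1 + (K * (M + Q3 \<sigma>)) * ennreal d0"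
      using X1 by (intro add_mono mult_left_mono) auto
    also have "\<dots> = K * (X1 + ennreal d0 * M + ennreal d0 * Q3 \<sigma>)"
      by (simp add: algebra_simps)
    finally show ?thesis .
  qed
  have "ennreal \<delta> * (ennreal d0 * mW) = (\<integral>\<^sup>+\<sigma>. (ennreal d0 * mW) * indicator {0..\<delta>} \<sigma> \<partial>lborel)"
    using \<delta> by (simp add: nn_integral_cmult_indicator mult.commute)
  also have "\<dots> \<le> (\<integral>\<^sup>+\<sigma>. (K * (X1 + ennreal d0 * M)) * indicator {0..\<delta>} \<sigma> + (K * ennreal d0) * (indicator {0..\<delta>} \<sigma> * Q3 \<sigma>) \<partial>lborel)"
  proof (rule nn_integral_mono)
    fix \<sigma>
    show "(ennreal d0 * mW) * indicator {0..\<delta>} \<sigma> \<le> (K * (X1 + ennreal d0 * M)) * indicator {0..\<delta>} \<sigma> + (K * ennreal d0) * (indicator {0..\<delta>} \<sigma> * Q3 \<sigma>)"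
      using step1[of \<sigma>] by (cases "\<sigma> \<in> {0..\<delta>}") (auto simp: algebra_simps)
  qed
  also have "\<dots> = (K * (X1 + ennreal d0 * M)) * ennreal \<delta> + (K * ennreal d0) * (\<integral>\<^sup>+\<sigma>. indicator {0..\<delta>} \<sigma> * Q3 \<sigma> \<partial>lborel)"
    using \<delta> by (subst nn_integral_add) (auto simp: nn_integral_cmult nn_integral_cmult_indicator)
  also have "\<dots> \<le> (K * (X1 + ennreal d0 * M)) * ennreal \<delta> + (K * ennreal d0) * X3"
    using X3 by (intro add_mono mult_left_mono) auto
  also have "\<dots> = K * (ennreal \<delta> * (X1 + ennreal d0 * M) + ennreal d0 * X3)"
    by (simp add: algebra_simps)
  finally show ?thesis .
qed

lemma final_arith:
  fixes N :: ennreal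
  assumes H: "ennreal \<delta> * (ennreal d0 * ennreal m) \<le> ennreal K * (ennreal \<delta> * ((ennreal c11 * N + ennreal c12 * ennreal m)
      + ennreal d0 * (ennreal L * N + ennreal L' * ennreal m)) + ennreal d0 * (ennreal c31 * N + ennreal c32 * ennreal m))"
    and nn: "\<delta> \<ge> 0" "d0 \<ge> 0" "m \<ge> 0" "c11 \<ge> 0" "c12 \<ge> 0" "L \<ge> 0" "L' \<ge> 0" "c31 \<ge> 0" "c32 \<ge> 0"
    and K: "K > 0"
    and eq: "K * (\<delta> * c12 + \<delta> * d0 * L' + d0 * c32) * m = \<delta> * d0 * m / 2"
    and Y: "\<delta> * c11 + \<delta> * d0 * L + d0 * c31 > 0"
  shows "ennreal (\<delta> * d0 * m / (2 * K * (\<delta> * c11 + \<delta> * d0 * L + d0 * c31))) \<le> N"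
proof (cases "N = \<infinity>")
  case True then show ?thesis by simp
next
  case False
  then obtain n where n: "N = ennreal n" "n \<ge> 0" by (cases N) auto
  define rhs where "rhs = K * (\<delta> * ((c11 * n + c12 * m) + d0 * (L * n + L' * m)) + d0 * (c31 * n + c32 * m))"
  have "ennreal K * (ennreal \<delta> * ((ennreal c11 * N + ennreal c12 * ennreal m)
      + ennreal d0 * (ennreal L * N + ennreal L' * ennreal m)) + ennreal d0 * (ennreal c31 * N + ennreal c32 * ennreal m))
      = ennreal rhs"
    unfolding rhs_def n(1) using nn K n(2)
    by (simp add: ennreal_plus ennreal_mult algebra_simps)
  moreover have "ennreal \<delta> * (ennreal d0 * ennreal m) = ennreal (\<delta> * (d0 * m))"
    using nn by (simp add: ennreal_mult)
  ultimately have "ennreal (\<delta> * (d0 * m)) \<le> ennreal rhs" using H by simp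
  moreover have "rhs \<ge> 0" unfolding rhs_def using nn K n(2) by simp
  ultimately have le: "\<delta> * (d0 * m) \<le> rhs" by (simp add: ennreal_le_iff)
  have "rhs = K * n * (\<delta> * c11 + \<delta> * d0 * L + d0 * c31) + K * (\<delta> * c12 + \<delta> * d0 * L' + d0 * c32) * m"
    unfolding rhs_def by (simp add: algebra_simps)
  also have "\<dots> = K * n * (\<delta> * c11 + \<delta> * d0 * L + d0 * c31) + \<delta> * d0 * m / 2" using eq by simp
  finally have "\<delta> * d0 * m / 2 \<le> K * n * (\<delta> * c11 + \<delta> * d0 * L + d0 * c31)" using le by simp
  then have "\<delta> * d0 * m / (2 * K * (\<delta> * c11 + \<delta> * d0 * L + d0 * c31)) \<le> n"
  proof -
    have "\<delta> * d0 * m \<le> n * (2 * K * (\<delta> * c11 + \<delta> * d0 * L + d0 * c31))"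
      using \<open>\<delta> * d0 * m / 2 \<le> K * n * (\<delta> * c11 + \<delta> * d0 * L + d0 * c31)\<close> by (simp add: algebra_simps)
    then show ?thesis using K Y by (simp add: pos_divide_le_eq)
  qed
  then show ?thesis using n by (simp add: ennreal_leI)
qed

theorem lemma3p1:
  fixes p \<epsilon>1 r :: real and x0 :: "real ^ 'n" and D A :: "(real ^ 'n) set"
    and C :: "nat \<Rightarrow> (real ^ 'n) set"
  assumes "CARD('n) \<ge> 2"
    and "real CARD('n) - 1 < p" and "p \<le> real CARD('n)"
    and "\<epsilon>1 > 0"
    and "open D" and "connected D" and "ball x0 \<epsilon>1 \<subseteq> D"
    and "continuum A" and "nondegenerate A" and "A \<subseteq> D"
    and "r > 0"
    and "\<And>j. j \<ge> 1 \<Longrightarrow> continuum (C j) \<and> C j \<subseteq> ball x0 \<epsilon>1 \<and> chordal_diam (C j) \<ge> r"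
  shows "\<exists>R0 > 0. \<forall>j \<ge> 1. p_modulus p (path_family (C j) A D) \<ge> ennreal R0"
proof -
  let ?n = "real CARD('n)"
  have DIMn: "DIM(real^'n) = CARD('n)" by simp
  have n2: "?n \<ge> 2" using assms(1) by simp
  have p1: "p > 1" using assms(2) n2 by linarith
  obtain a b where ab: "a \<in> A" "b \<in> A" "a \<noteq> b" using assms(9) unfolding nondegenerate_def by auto
  have aD: "a \<in> D" using ab assms(10) by auto
  obtain \<eta> where \<eta>: "\<eta> > 0" "ball a \<eta> \<subseteq> D" using assms(5) aD open_contains_ball by blast
  define \<delta> where "\<delta> = min (dist a b) \<eta> / 2"
  have \<delta>: "\<delta> > 0" "\<delta> \<le> dist a b" "\<delta> < \<eta>" using ab \<eta> zero_le_dist[of a b] by (auto simp: \<delta>_def min_def)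
  have Acon: "connected A" using assms(8) by (simp add: continuum_def)
  have "\<forall>\<sigma>\<in>{0..\<delta>}. \<exists>v\<in>A. dist a v = \<sigma>"
    using dist_ivt[OF Acon ab(1) ab(2)] \<delta> by auto
  then obtain v where v: "\<And>\<sigma>. \<sigma> \<in> {0..\<delta>} \<Longrightarrow> v \<sigma> \<in> A \<and> dist a (v \<sigma>) = \<sigma>" by metis
  have x0D: "x0 \<in> D" using assms(4,7) by auto
  obtain P where P: "polynomial_function P" "path_image P \<subseteq> D" "pathstart P = x0" "pathfinish P = a"
    using connected_open_polynomial_connected[OF assms(5,6) x0D aD] by blast
  have P01: "P 0 = x0" "P 1 = a" using P by (simp_all add: pathstart_def pathfinish_def)
  obtain LP where LP: "LP > 0" "LP-lipschitz_on {0..1} P" using polynomial_lipschitz01[OF P(1)] by blast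
  have Pm[measurable]: "P \<in> borel_measurable borel"
    using continuous_on_polymonial_function[OF P(1)] by (simp add: borel_measurable_continuous_onI)
  obtain e where e: "e > 0" "(\<Union>x\<in>path_image P. ball x e) \<subseteq> D"
    using compact_subset_open_imp_ball_epsilon_subset[OF compact_path_image[OF path_polynomial_function[OF P(1)]] assms(5) P(2)]
    by blast
  define \<theta> where "\<theta> = min e (min \<epsilon>1 (\<eta> / 2))"
  have \<theta>: "\<theta> > 0" "\<theta> \<le> e" "\<theta> \<le> \<epsilon>1" "\<theta> < \<eta>" using e assms(4) \<eta> by (auto simp: \<theta>_def)
  define W where "W = ball x0 \<theta>"
  have Wm[measurable]: "W \<in> sets borel" unfolding W_def by simp
  define mWr where "mWr = unit_ball_vol ?n * \<theta> ^ CARD('n)"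
  have mW: "emeasure lborel W = ennreal mWr" unfolding W_def mWr_def using \<theta>(1) by (subst emeasure_ball) (simp_all only: DIMn less_imp_le)
  have mWr: "mWr > 0" unfolding mWr_def using \<theta> by simp
  define d0 where "d0 = r / 2"
  have d0: "d0 > 0" using assms(11) by (simp add: d0_def)
  define R1 where "R1 = 2 * \<epsilon>1"
  define R3 where "R3 = \<theta> + \<delta>"
  have R1: "R1 > 0" and R3: "R3 > 0" using assms(4) \<theta> \<delta> by (auto simp: R1_def R3_def)
  define K where "K = R1 + LP + R3"
  have K: "K > 0" "R1 \<le> K" "LP \<le> K" "R3 \<le> K" using R1 R3 LP by (auto simp: K_def)
  define \<alpha> where "\<alpha> = (p + ?n - 3) / 2"
  have \<alpha>1: "\<alpha> - real DIM(real^'n) + 1 > -1" using assms(2) by (simp add: \<alpha>_def field_simps)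
  have \<alpha>2: "\<alpha> / (p - 1) < 1" using assms(2) p1 by (simp add: \<alpha>_def divide_less_eq)
  define Z where "Z = 2 / (1 - \<alpha> / (p - 1)) + 1"
  have Z: "Z > 0" using \<alpha>2 by (simp add: Z_def add_pos_pos)
  define \<Lambda> where "\<Lambda> = (2 * K * Z) powr (p - 1)"
  have \<Lambda>: "\<Lambda> > 0" using K Z by (simp add: \<Lambda>_def)
  have \<Lambda>': "\<Lambda> powr (- 1 / (p - 1)) = 1 / (2 * K * Z)"
    using K Z p1 by (simp add: \<Lambda>_def powr_powr powr_minus_divide)
  define c11 where "c11 = \<Lambda> * 2 * R1 / (\<alpha> - real DIM(real^'n) + 2)"
  define c12 where "c12 = \<Lambda> powr (- 1 / (p - 1)) * d0 / (1 - \<alpha> / (p - 1))"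
  define c31 where "c31 = \<Lambda> * 2 * R3 / (\<alpha> - real DIM(real^'n) + 2)"
  define c32 where "c32 = \<Lambda> powr (- 1 / (p - 1)) * \<delta> / (1 - \<alpha> / (p - 1))"
  define R0 where "R0 = \<delta> * d0 * mWr / (2 * K * (\<delta> * c11 + \<delta> * d0 * \<Lambda> + d0 * c31))"
  have c11: "c11 > 0" unfolding c11_def using \<Lambda> R1 \<alpha>1 by simp
  have c31: "c31 > 0" unfolding c31_def using \<Lambda> R3 \<alpha>1 by simp
  have c12: "c12 > 0" unfolding c12_def using \<Lambda> d0 \<alpha>2 by simp
  have c32: "c32 > 0" unfolding c32_def using \<Lambda> \<delta> \<alpha>2 by simp
  have Ypos: "\<delta> * c11 + \<delta> * d0 * \<Lambda> + d0 * c31 > 0" using c11 c31 \<delta> d0 \<Lambda> by (simp add: add_pos_pos)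
  have R0: "R0 > 0" unfolding R0_def using \<delta> d0 mWr K Ypos by simp
  have eqK: "K * (\<delta> * c12 + \<delta> * d0 * (\<Lambda> powr (- 1 / (p - 1))) + d0 * c32) * mWr = \<delta> * d0 * mWr / 2"
  proof -
    have b1: "1 - \<alpha> / (p - 1) \<noteq> 0" using \<alpha>2 by linarith
    have b2: "p - 1 \<noteq> 0" using p1 by simp
    have "\<delta> * c12 + \<delta> * d0 * (\<Lambda> powr (- 1 / (p - 1))) + d0 * c32 = (\<Lambda> powr (- 1 / (p - 1))) * (\<delta> * d0) * Z"
    proof -
      have gen: "\<delta> * (L * d0 / B) + \<delta> * d0 * L + d0 * (L * \<delta> / B) = L * (\<delta> * d0) * (2 / B + 1)"
        if "B \<noteq> 0" for L B :: real using that by (simp add: field_simps)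
      show ?thesis unfolding c12_def c32_def Z_def by (rule gen[OF b1])
    qed
    also have "\<dots> = \<delta> * d0 / (2 * K)" unfolding \<Lambda>' using Z K by (simp add: field_simps)
    finally have hS: "\<delta> * c12 + \<delta> * d0 * (\<Lambda> powr (- 1 / (p - 1))) + d0 * c32 = \<delta> * d0 / (2 * K)" .
    show ?thesis unfolding hS using K by (simp add: field_simps)
  qed
  show ?thesis
  proof (intro exI[of _ R0] conjI allI impI R0)
    fix j :: nat assume j: "j \<ge> 1"
    have Cj: "continuum (C j)" "C j \<subseteq> ball x0 \<epsilon>1" "chordal_diam (C j) \<ge> r" using assms(12)[OF j] by auto
    have Cne: "C j \<noteq> {}" and Ccon: "connected (C j)" using Cj(1) by (auto simp: continuum_def)
    obtain x y where xy: "x \<in> C j" "y \<in> C j" "dist x y > r / 2" using far_points[OF Cne Cj(3) assms(11)] by blast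
    have "\<forall>s\<in>{0..d0}. \<exists>u\<in>C j. dist x u = s" using dist_ivt[OF Ccon xy(1) xy(2)] xy(3) by (auto simp: d0_def)
    then obtain u where u: "\<And>s. s \<in> {0..d0} \<Longrightarrow> u s \<in> C j \<and> dist x (u s) = s" by metis
    show "ennreal R0 \<le> p_modulus p (path_family (C j) A D)"
      unfolding p_modulus_def
    proof (rule INF_greatest)
      fix \<rho> assume "\<rho> \<in> Collect (admissible (path_family (C j) A D))"
      then have \<rho>m[measurable]: "\<rho> \<in> borel_measurable borel"
        and adm: "\<forall>(g, s, t)\<in>path_family (C j) A D. rectifiable_on g s t \<longrightarrow> 1 \<le> line_integral \<rho> g s t"
        unfolding admissible_def by auto
      define N where "N = (\<integral>\<^sup>+z. enn_powr (\<rho> z) p \<partial>lborel)"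
      define Qf where "Qf = (\<lambda>R (\<phi>::real^'n \<Rightarrow> real) s. \<integral>\<^sup>+t. indicator {0<..1} t *
            (ennreal ((\<Lambda> * t powr \<alpha>) * t powr (- real DIM(real^'n))) *
              (\<integral>\<^sup>+z. enn_powr (\<rho> z) p * indicator {z. \<bar>\<phi> z - s\<bar> \<le> t * R} z \<partial>lborel)
             + ennreal ((\<Lambda> * t powr \<alpha>) powr (- 1 / (p - 1))) * emeasure lborel W) \<partial>lborel)"
      define F1 where "F1 = (\<lambda>s w. \<integral>\<^sup>+t. \<rho> (u s + t *\<^sub>R (w + 0 - u s)) * indicator {0..1} t \<partial>lborel)"
      define F2 where "F2 = (\<lambda>w. \<integral>\<^sup>+t. \<rho> (w + (P t - x0)) * indicator {0..1} t \<partial>lborel)"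
      define F3 where "F3 = (\<lambda>\<sigma> w. \<integral>\<^sup>+t. \<rho> (v \<sigma> + t *\<^sub>R (w + (a - x0) - v \<sigma>)) * indicator {0..1} t \<partial>lborel)"
      define M where "M = ennreal \<Lambda> * N + ennreal (\<Lambda> powr (- 1 / (p - 1))) * emeasure lborel W"
      have pw: "1 \<le> ennreal K * (F1 s w + F2 w + F3 \<sigma> w)"
        if s: "s \<in> {0..d0}" and \<sigma>: "\<sigma> \<in> {0..\<delta>}" and w: "w \<in> W" for s \<sigma> w
      proof -
        have us: "u s \<in> C j" "u s \<in> ball x0 \<epsilon>1" using u[OF s] Cj(2) by auto
        have vs: "v \<sigma> \<in> A" "dist a (v \<sigma>) \<le> \<delta>" using v[OF \<sigma>] \<sigma> by auto
        have wb: "dist x0 w < \<theta>" using w by (simp add: W_def)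
        have wb1: "w \<in> ball x0 \<epsilon>1" using wb \<theta> by simp
        have n1: "norm (w + 0 - u s) \<le> K"
        proof -
          have "norm (w + 0 - u s) \<le> dist w x0 + dist x0 (u s)"
            by (simp add: dist_norm) (metis dist_norm dist_triangle)
          also have "\<dots> \<le> R1" using wb us(2) \<theta> by (simp add: R1_def dist_commute)
          finally show ?thesis using K by simp
        qed
        have n3: "norm (w + (a - x0) - v \<sigma>) \<le> K"
        proof -
          have "norm (w + (a - x0) - v \<sigma>) = norm ((w - x0) + (a - v \<sigma>))" by (simp add: algebra_simps)
          also have "\<dots> \<le> norm (w - x0) + norm (a - v \<sigma>)" by (rule norm_triangle_ineq)
          also have "\<dots> \<le> R3" using wb vs(2) by (simp add: R3_def dist_norm norm_minus_commute)
          finally show ?thesis using K by simp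
        qed
        show ?thesis
          unfolding F1_def F2_def F3_def
        proof (rule three_piece[where E="C j" and F=A and G=D, OF \<rho>m _ _ _ K(1)])
          show "(\<lambda>t. u s + t *\<^sub>R (w + 0 - u s)) \<in> borel_measurable borel" by measurable
          show "(\<lambda>t. w + (P t - x0)) \<in> borel_measurable borel" by measurable
          show "(\<lambda>t. v \<sigma> + t *\<^sub>R (w + (a - x0) - v \<sigma>)) \<in> borel_measurable borel" by measurable
          show "K-lipschitz_on {0..1} (\<lambda>t. u s + t *\<^sub>R (w + 0 - u s))"
            by (rule lipschitz_on_mono[OF segment_lipschitz order_refl n1])
          show "K-lipschitz_on {0..1} (\<lambda>t. v \<sigma> + t *\<^sub>R (w + (a - x0) - v \<sigma>))"
            by (rule lipschitz_on_mono[OF segment_lipschitz order_refl n3])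
          show "K-lipschitz_on {0..1} (\<lambda>t. w + (P t - x0))"
          proof (rule lipschitz_onI)
            fix t t' :: real assume "t \<in> {0..1}" "t' \<in> {0..1}"
            then have "dist (P t) (P t') \<le> LP * dist t t'" using lipschitz_onD[OF LP(2)] by blast
            also have "\<dots> \<le> K * dist t t'" using K by (simp add: mult_right_mono)
            finally show "dist (w + (P t - x0)) (w + (P t' - x0)) \<le> K * dist t t'"
              by (simp add: dist_norm algebra_simps)
          qed (use K in simp)
          show "u s + 1 *\<^sub>R (w + 0 - u s) = w + (P 0 - x0)" by (simp add: P01)
          show "w + (P 1 - x0) = v \<sigma> + 1 *\<^sub>R (w + (a - x0) - v \<sigma>)" by (simp add: P01 algebra_simps)
          show "u s + 0 *\<^sub>R (w + 0 - u s) \<in> C j" using us by simp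
          show "v \<sigma> + 0 *\<^sub>R (w + (a - x0) - v \<sigma>) \<in> A" using vs by simp
          show "u s + t *\<^sub>R (w + 0 - u s) \<in> D" if "0 < t" "t \<le> 1" for t
          proof -
            have "u s + t *\<^sub>R ((w + 0) - u s) \<in> ball x0 \<epsilon>1"
              by (rule seg_in_convex) (use us wb1 that in auto)
            then show ?thesis using assms(7) by auto
          qed
          show "w + (P t - x0) \<in> D" if "0 \<le> t" "t \<le> 1" for t
          proof -
            have "P t \<in> path_image P" using that by (auto simp: path_image_def)
            moreover have "w + (P t - x0) \<in> ball (P t) e"
              using wb \<theta> by (simp add: dist_norm algebra_simps norm_minus_commute)
            ultimately show ?thesis using e(2) by blast
          qed
          show "v \<sigma> + t *\<^sub>R (w + (a - x0) - v \<sigma>) \<in> D" if "0 < t" "t \<le> 1" for t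
          proof -
            have "v \<sigma> \<in> ball a \<eta>" using vs(2) \<delta> by simp
            moreover have "w + (a - x0) \<in> ball a \<eta>"
              using wb \<theta> by (simp add: dist_norm algebra_simps norm_minus_commute)
            ultimately have "v \<sigma> + t *\<^sub>R (w + (a - x0) - v \<sigma>) \<in> ball a \<eta>"
              by (intro seg_in_convex) (use that in auto)
            then show ?thesis using \<eta>(2) by auto
          qed
        qed (rule adm)
      qed
      have Wfin: "emeasure lborel W = ennreal mWr" by (rule mW)
      have dL: "\<bar>dist c z - dist c z'\<bar> \<le> dist z z'" for c z z' :: "real^'n"
        by (metis abs_dist_diff_le dist_commute)
      have Am: "(\<lambda>t::real. \<Lambda> * t powr \<alpha>) \<in> borel_measurable borel" by measurable
      have Apos: "\<And>t::real. 0 < t \<Longrightarrow> 0 < \<Lambda> * t powr \<alpha>" using \<Lambda> by simp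
      have I1: "(\<integral>\<^sup>+w. indicator W w * F1 s w \<partial>lborel) \<le> Qf R1 (dist x) s" if s: "s \<in> {0..d0}" for s
      proof -
        have us: "u s \<in> ball x0 \<epsilon>1" "dist x (u s) = s" using u[OF s] Cj(2) by auto
        have "(\<integral>\<^sup>+w. indicator W w * F1 s w \<partial>lborel)
            = (\<integral>\<^sup>+w. indicator W w * (\<integral>\<^sup>+t. \<rho> (u s + t *\<^sub>R (w + 0 - u s)) * indicator {0<..1} t \<partial>lborel) \<partial>lborel)"
          unfolding F1_def by (simp only: ind01_AE)
        also have "\<dots> \<le> Qf R1 (dist x) (dist x (u s))"
          unfolding Qf_def
        proof (rule key_inner[where A="\<lambda>t. \<Lambda> * t powr \<alpha>", OF \<rho>m _ dL Wm _ p1 Apos Am])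
          show "(\<lambda>z. dist x z) \<in> borel_measurable borel" by measurable
          fix w assume "w \<in> W"
          then have "dist x0 w < \<theta>" by (simp add: W_def)
          then have "dist w (u s) < \<theta> + \<epsilon>1" using us(1) by (metis add_strict_mono dist_commute dist_triangle_lt mem_ball)
          then show "norm (w + 0 - u s) \<le> R1" using \<theta> by (simp add: R1_def dist_norm)
        qed
        finally show ?thesis using us(2) by simp
      qed
      have I3: "(\<integral>\<^sup>+w. indicator W w * F3 \<sigma> w \<partial>lborel) \<le> Qf R3 (dist a) \<sigma>" if \<sigma>: "\<sigma> \<in> {0..\<delta>}" for \<sigma>
      proof -
        have vs: "dist a (v \<sigma>) = \<sigma>" "\<sigma> \<le> \<delta>" using v[OF \<sigma>] \<sigma> by auto
        have "(\<integral>\<^sup>+w. indicator W w * F3 \<sigma> w \<partial>lborel)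
            = (\<integral>\<^sup>+w. indicator W w * (\<integral>\<^sup>+t. \<rho> (v \<sigma> + t *\<^sub>R (w + (a - x0) - v \<sigma>)) * indicator {0<..1} t \<partial>lborel) \<partial>lborel)"
          unfolding F3_def by (simp only: ind01_AE)
        also have "\<dots> \<le> Qf R3 (dist a) (dist a (v \<sigma>))"
          unfolding Qf_def
        proof (rule key_inner[where A="\<lambda>t. \<Lambda> * t powr \<alpha>", OF \<rho>m _ dL Wm _ p1 Apos Am])
          show "(\<lambda>z. dist a z) \<in> borel_measurable borel" by measurable
          fix w assume "w \<in> W"
          then have wb: "dist x0 w < \<theta>" by (simp add: W_def)
          have "norm (w + (a - x0) - v \<sigma>) = norm ((w - x0) + (a - v \<sigma>))" by (simp add: algebra_simps)
          also have "\<dots> \<le> norm (w - x0) + norm (a - v \<sigma>)" by (rule norm_triangle_ineq)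
          also have "\<dots> \<le> R3" using wb vs by (simp add: R3_def dist_norm norm_minus_commute)
          finally show "norm (w + (a - x0) - v \<sigma>) \<le> R3" .
        qed
        finally show ?thesis using vs(1) by simp
      qed
      have I2: "(\<integral>\<^sup>+w. indicator W w * F2 w \<partial>lborel) \<le> M"
        unfolding F2_def M_def N_def
        by (rule middle_bound[OF \<rho>m _ Wm \<Lambda> p1]) measurable
      have F1m: "(\<lambda>w. indicator W w * F1 s w) \<in> borel_measurable lborel" for s
        unfolding F1_def by measurable
      have F2m: "(\<lambda>w. indicator W w * F2 w) \<in> borel_measurable lborel"
        unfolding F2_def by measurable
      have F3m: "(\<lambda>w. indicator W w * F3 \<sigma> w) \<in> borel_measurable lborel" for \<sigma>
        unfolding F3_def by measurable
      have pw2: "emeasure lborel W \<le> ennreal K * (Qf R1 (dist x) s + M + Qf R3 (dist a) \<sigma>)"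
        if s: "s \<in> {0..d0}" and \<sigma>: "\<sigma> \<in> {0..\<delta>}" for s \<sigma>
      proof -
        have "emeasure lborel W = (\<integral>\<^sup>+w. indicator W w \<partial>lborel)" by simp
        also have "\<dots> \<le> (\<integral>\<^sup>+w. ennreal K * (indicator W w * F1 s w) + ennreal K * (indicator W w * F2 w)
              + ennreal K * (indicator W w * F3 \<sigma> w) \<partial>lborel)"
        proof (rule nn_integral_mono)
          fix w
          show "indicator W w \<le> ennreal K * (indicator W w * F1 s w) + ennreal K * (indicator W w * F2 w)
              + ennreal K * (indicator W w * F3 \<sigma> w)"
            using pw[OF s \<sigma>, of w] by (cases "w \<in> W") (auto simp: algebra_simps)
        qed
        also have "\<dots> = ennreal K * (\<integral>\<^sup>+w. indicator W w * F1 s w \<partial>lborel) + ennreal K * (\<integral>\<^sup>+w. indicator W w * F2 w \<partial>lborel)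
              + ennreal K * (\<integral>\<^sup>+w. indicator W w * F3 \<sigma> w \<partial>lborel)"
          using F1m F2m F3m by (simp add: nn_integral_add nn_integral_cmult)
        also have "\<dots> \<le> ennreal K * Qf R1 (dist x) s + ennreal K * M + ennreal K * Qf R3 (dist a) \<sigma>"
          using I1[OF s] I2 I3[OF \<sigma>] by (intro add_mono mult_left_mono) auto
        finally show ?thesis by (simp add: algebra_simps)
      qed
      have Q1m: "Qf R1 (dist x) \<in> borel_measurable borel" unfolding Qf_def by measurable
      have Q3m: "Qf R3 (dist a) \<in> borel_measurable borel" unfolding Qf_def by measurable
      have X1: "(\<integral>\<^sup>+s. indicator {0..d0} s * Qf R1 (dist x) s \<partial>lborel)
          \<le> ennreal c11 * N + ennreal c12 * emeasure lborel W"
        unfolding Qf_def c11_def c12_def N_def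
        by (rule key_outer[OF \<rho>m _ R1 _ \<Lambda> p1 \<alpha>1 \<alpha>2]) (use d0 in auto)
      have X3: "(\<integral>\<^sup>+s. indicator {0..\<delta>} s * Qf R3 (dist a) s \<partial>lborel)
          \<le> ennreal c31 * N + ennreal c32 * emeasure lborel W"
        unfolding Qf_def c31_def c32_def N_def
        by (rule key_outer[OF \<rho>m _ R3 _ \<Lambda> p1 \<alpha>1 \<alpha>2]) (use \<delta> in auto)
      have H: "ennreal \<delta> * (ennreal d0 * emeasure lborel W) \<le> ennreal K * (ennreal \<delta> * ((ennreal c11 * N + ennreal c12 * emeasure lborel W)
          + ennreal d0 * M) + ennreal d0 * (ennreal c31 * N + ennreal c32 * emeasure lborel W))"
        by (rule integrate_two[OF pw2 Q1m Q3m X1 X3]) (use d0 \<delta> in auto)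
      show "ennreal R0 \<le> N"
        unfolding R0_def
      proof (rule final_arith[OF _ _ _ _ _ _ _ _ _ _ K(1) eqK Ypos])
        show "ennreal \<delta> * (ennreal d0 * ennreal mWr) \<le> ennreal K * (ennreal \<delta> * ((ennreal c11 * N + ennreal c12 * ennreal mWr)
          + ennreal d0 * (ennreal \<Lambda> * N + ennreal (\<Lambda> powr (- 1 / (p - 1))) * ennreal mWr)) + ennreal d0 * (ennreal c31 * N + ennreal c32 * ennreal mWr))"
          using H unfolding M_def Wfin .
      qed (use \<delta> d0 mWr c11 c12 \<Lambda> c31 c32 in auto)
    qed
  qed
qed

end
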